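(* Let $s>1$. Then $k^\lambda\to k$ in the norm of $B(\mathscr{H}_s,\mathscr{H}_{-s})$ as $\lambda\downarrow0$.
   Context: $\mathscr{H}_s=\{u:(1+|x|^2)^{s/2}u\in L^2(\mathbb{R}^2)\}$. For $\lambda>0$, $g^\lambda(x)=\frac{1}{2\pi}K_0(\lambda^{1/2}|x|)$ is the convolution kernel of $(-\Delta+\lambda)^{-1}$ on $\mathbb{R}^2$ ($K_0$ the modified Bessel function). Fix a unit vector $u\in\mathbb{R}^2$. $k(x)=\frac{1}{2\pi}\log\frac{1}{|x|}$ and $k^\lambda(x)=g^\lambda(x)-g^\lambda(u)$; $k$ and $k^\lambda$ also denote the corresponding convolution operators. *)

theory Defs
  imports "HOL-Analysis.Analysis"
begin

text \<open>Modified Bessel function K_0 for z > 0, via its integral representation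
  K_0(z) = int_0^infinity exp(-z cosh t) dt.\<close>
definition K0 :: "real \<Rightarrow> real" where
  "K0 z = (LINT t|lborel. indicator {0..} t * exp (- z * cosh t))"

text \<open>Kernel of the resolvent (-Delta + lam)^(-1) on R^2.\<close>
definition gker :: "real \<Rightarrow> real^2 \<Rightarrow> real" where
  "gker lam x = 1 / (2 * pi) * K0 (sqrt lam * norm x)"

definition kker :: "real^2 \<Rightarrow> real" where
  "kker x = 1 / (2 * pi) * ln (1 / norm x)"

definition klam :: "real \<Rightarrow> real^2 \<Rightarrow> real^2 \<Rightarrow> real" where
  "klam lam u x = gker lam x - gker lam u"

definition Hs :: "real \<Rightarrow> (real^2 \<Rightarrow> complex) set" where
  "Hs s = {f. f \<in> borel_measurable lebesgue \<and>
     integrable lebesgue (\<lambda>x. (1 + (norm x)\<^sup>2) powr s * (cmod (f x))\<^sup>2)}"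

definition Hnorm :: "real \<Rightarrow> (real^2 \<Rightarrow> complex) \<Rightarrow> real" where
  "Hnorm s f = sqrt (LINT x|lebesgue. (1 + (norm x)\<^sup>2) powr s * (cmod (f x))\<^sup>2)"

definition conv :: "(real^2 \<Rightarrow> real) \<Rightarrow> (real^2 \<Rightarrow> complex) \<Rightarrow> real^2 \<Rightarrow> complex" where
  "conv K f x = (LINT y|lebesgue. complex_of_real (K (x - y)) * f y)"

end

theory Submission
  imports Defs "HOL-Real_Asymp.Real_Asymp"
begin


lemma nn_integral_reflect_translate:
  fixes f :: "'a::euclidean_space \<Rightarrow> ennreal"
  assumes [measurable]: "f \<in> borel_measurable borel"
  shows "(\<integral>\<^sup>+y. f (x - y) \<partial>lborel) = (\<integral>\<^sup>+y. f y \<partial>lborel)"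
proof -
  have "(\<integral>\<^sup>+y. f y \<partial>lborel) = (\<integral>\<^sup>+y. f y \<partial>(density (distr lborel borel (\<lambda>y. x + (-1) *\<^sub>R y)) (\<lambda>_. \<bar>-1::real\<bar>^DIM('a))))"
    using lborel_affine[of "-1::real" x] by simp
  also have "\<dots> = (\<integral>\<^sup>+y. f (x - y) \<partial>lborel)"
    by (simp add: nn_integral_density nn_integral_distr)
  finally show ?thesis ..
qed

lemma hyperplane_null:
  fixes b :: "'a::euclidean_space"
  assumes "b \<in> Basis"
  shows "{z. z \<bullet> b = 0} \<in> null_sets lborel"
proof -
  have "negligible {z::'a. z \<bullet> b = 0}" using negligible_standard_hyperplane[OF assms] .
  then have "{z::'a. z \<bullet> b = 0} \<in> null_sets lebesgue" using negligible_iff_null_sets by blast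
  moreover have "{z::'a. z \<bullet> b = 0} \<in> sets lborel" by measurable
  ultimately show ?thesis using null_sets_completion_iff by blast
qed

lemma AE_coords_nonzero:
  "AE z in (lborel::'a::euclidean_space measure). \<forall>b\<in>Basis. z \<bullet> b \<noteq> 0"
proof -
  have "(\<Union>b\<in>Basis. {z::'a. z \<bullet> b = 0}) \<in> null_sets lborel"
    using hyperplane_null by (intro null_sets_UN') (auto intro: countable_finite)
  then show ?thesis
    by (rule AE_I') auto
qed

lemma pow0_int:
  assumes "0 \<le> \<beta>" "\<beta> < 1"
  shows "(\<integral>\<^sup>+t. ennreal (indicator {0..1} t * t powr (-\<beta>)) \<partial>lborel) = ennreal (1/(1-\<beta>))"
proof -
  have "((\<lambda>x. x powr (-\<beta>)) has_integral (1 powr (-\<beta>+1) / (-\<beta>+1))) {0..1::real}"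
    by (rule has_integral_powr_from_0) (use assms in auto)
  from nn_integral_has_integral_lebesgue[OF _ this]
  show ?thesis by (simp add: diff_minus_eq_add add.commute)
qed

lemma tail_int:
  assumes "\<sigma> > 1"
  shows "(\<integral>\<^sup>+t. ennreal ((1+t) powr (-\<sigma>)) * indicator {0..} t \<partial>lborel) = ennreal (1/(\<sigma>-1))"
proof -
  define F where "F = (\<lambda>t::real. - ((1+t) powr (1-\<sigma>)) / (\<sigma>-1))"
  have "(\<integral>\<^sup>+t. ennreal ((1+t) powr (-\<sigma>)) * indicator {0..} t \<partial>lborel)
     = 0 - F 0"
  proof (rule nn_integral_FTC_atLeast)
    show "(\<lambda>t. (1+t) powr (-\<sigma>)) \<in> borel_measurable borel" by measurable
    show "(F \<longlongrightarrow> 0) at_top"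
      using assms unfolding F_def by real_asymp
    fix x :: real assume x: "0 \<le> x"
    show "0 \<le> (1+x) powr (-\<sigma>)" by simp
    have d: "((\<lambda>t. t powr (1-\<sigma>)) has_real_derivative (1-\<sigma>) * (1+x) powr (1-\<sigma>-1)) (at (1+x))"
      using x by (intro has_real_derivative_powr) auto
    have d2: "((\<lambda>t. (1+t) powr (1-\<sigma>)) has_real_derivative (1-\<sigma>) * (1+x) powr (-\<sigma>)) (at x)"
    proof -
      have e: "((\<lambda>t. 1+t) has_real_derivative 1) (at x)" by (auto intro!: derivative_eq_intros)
      have "((\<lambda>t. (\<lambda>t. t powr (1-\<sigma>)) ((\<lambda>t. 1+t) t)) has_real_derivative (1-\<sigma>) * (1+x) powr (1-\<sigma>-1) * 1) (at x)"
        by (rule DERIV_chain2[OF d e])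
      then show ?thesis by simp
    qed
    show "(F has_real_derivative (1+x) powr (-\<sigma>)) (at x)"
    proof -
      have "((\<lambda>t. -((1+t) powr (1-\<sigma>)) / (\<sigma>-1)) has_real_derivative (-((1-\<sigma>)*(1+x) powr -\<sigma>))/(\<sigma>-1)) (at x)"
        by (intro DERIV_cdivide DERIV_minus d2)
      moreover have "(-((1-\<sigma>)*(1+x) powr -\<sigma>))/(\<sigma>-1) = (1+x) powr -\<sigma>" using assms by (simp add: field_simps)
      ultimately show ?thesis unfolding F_def by simp
    qed
  qed
  then show ?thesis by (simp add: F_def)
qed

lemma nn_sym:
  fixes h :: "real \<Rightarrow> real"
  assumes [measurable]: "h \<in> borel_measurable borel" and nn: "\<And>t. 0 \<le> h t"
  shows "(\<integral>\<^sup>+t. ennreal (h \<bar>t\<bar>) \<partial>lborel) \<le> 2 * (\<integral>\<^sup>+t. ennreal (h t) * indicator {0..} t \<partial>lborel)"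
proof -
  define A where "A = (\<lambda>t. ennreal (h t) * indicator {0..} t)"
  have [measurable]: "A \<in> borel_measurable borel" unfolding A_def by measurable
  have "(\<integral>\<^sup>+t. ennreal (h \<bar>t\<bar>) \<partial>lborel) \<le> (\<integral>\<^sup>+t. A t + A (0 - t) \<partial>lborel)"
    by (intro nn_integral_mono) (auto simp: A_def indicator_def)
  also have "\<dots> = (\<integral>\<^sup>+t. A t \<partial>lborel) + (\<integral>\<^sup>+t. A (0 - t) \<partial>lborel)"
    by (intro nn_integral_add) auto
  also have "(\<integral>\<^sup>+t. A (0 - t) \<partial>lborel) = (\<integral>\<^sup>+t. A t \<partial>lborel)"
    by (rule nn_integral_reflect_translate) measurable
  finally show ?thesis unfolding A_def by (simp add: mult_2)
qed

lemma R1: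
  assumes "\<sigma> > 1"
  shows "(\<integral>\<^sup>+t. ennreal ((1+\<bar>t\<bar>) powr (-\<sigma>)) \<partial>lborel) < \<infinity>"
proof -
  have "(\<integral>\<^sup>+t. ennreal ((1+\<bar>t\<bar>) powr (-\<sigma>)) \<partial>lborel) \<le> 2 * ennreal (1/(\<sigma>-1))"
    using nn_sym[of "\<lambda>t. (1+t) powr (-\<sigma>)"] tail_int[OF assms] by simp
  also have "\<dots> < \<infinity>" by (simp add: ennreal_mult_less_top)
  finally show ?thesis .
qed

lemma R2:
  assumes "0 \<le> \<beta>" "\<beta> < 1"
  shows "(\<integral>\<^sup>+t. ennreal (indicator {-1..1} t * \<bar>t\<bar> powr (-\<beta>)) \<partial>lborel) < \<infinity>"
proof -
  have "(\<integral>\<^sup>+t. ennreal (indicator {-1..1} t * \<bar>t\<bar> powr (-\<beta>)) \<partial>lborel)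
     = (\<integral>\<^sup>+t. ennreal ((\<lambda>t. indicator {-1..1} t * \<bar>t\<bar> powr (-\<beta>)) \<bar>t\<bar>) \<partial>lborel)"
    by (intro nn_integral_cong) (auto simp: indicator_def)
  also have "\<dots> \<le> 2 * (\<integral>\<^sup>+t. ennreal (indicator {-1..1} t * \<bar>t\<bar> powr (-\<beta>)) * indicator {0..} t \<partial>lborel)"
    by (rule nn_sym) auto
  also have "(\<integral>\<^sup>+t. ennreal (indicator {-1..1} t * \<bar>t\<bar> powr (-\<beta>)) * indicator {0..} t \<partial>lborel)
      = (\<integral>\<^sup>+t. ennreal (indicator {0..1} t * t powr (-\<beta>)) \<partial>lborel)"
    by (intro nn_integral_cong) (auto simp: indicator_def)
  also have "\<dots> = ennreal (1/(1-\<beta>))" by (rule pow0_int[OF assms])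
  finally show ?thesis by (simp add: ennreal_mult_less_top le_less_trans)
qed

lemma I2:
  assumes "\<sigma> > 1"
  shows "(\<integral>\<^sup>+(x::real^2). ennreal ((1 + (norm x)\<^sup>2) powr (-\<sigma>)) \<partial>lborel) < \<infinity>"
proof -
  have pw: "(1 + (norm x)\<^sup>2) powr (-\<sigma>) \<le> 2 powr \<sigma> * (\<Prod>b\<in>Basis. (1+\<bar>x \<bullet> b\<bar>) powr (-\<sigma>))" for x :: "real^2"
  proof -
    define P where "P = (\<Prod>b\<in>(Basis::(real^2) set). (1+\<bar>x \<bullet> b\<bar>))"
    have Ppos: "P > 0" unfolding P_def by (intro prod_pos) auto
    have "P \<le> (\<Prod>b\<in>(Basis::(real^2) set). (1 + norm x))"
      unfolding P_def by (intro prod_mono) (auto simp: Basis_le_norm)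
    also have "\<dots> = (1 + norm x)^2" by simp
    also have "\<dots> \<le> 2 * (1 + (norm x)\<^sup>2)"
    proof -
      have "0 \<le> (1 - norm x)^2" by simp
      then show ?thesis by (simp add: power2_eq_square algebra_simps)
    qed
    finally have P2: "P \<le> 2 * (1 + (norm x)\<^sup>2)" .
    have "(2 * (1 + (norm x)\<^sup>2)) powr (-\<sigma>) \<le> P powr (-\<sigma>)"
      using assms Ppos P2 by (intro powr_mono2') auto
    moreover have "(2 * (1 + (norm x)\<^sup>2)) powr (-\<sigma>) = 2 powr (-\<sigma>) * (1 + (norm x)\<^sup>2) powr (-\<sigma>)"
      by (rule powr_mult)
    moreover have "P powr (-\<sigma>) = (\<Prod>b\<in>Basis. (1+\<bar>x \<bullet> b\<bar>) powr (-\<sigma>))"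
      unfolding P_def by (rule prod_powr_distrib)
    ultimately have "2 powr (-\<sigma>) * (1 + (norm x)\<^sup>2) powr (-\<sigma>) \<le> (\<Prod>b\<in>Basis. (1+\<bar>x \<bullet> b\<bar>) powr (-\<sigma>))"
      by simp
    then have "2 powr \<sigma> * (2 powr (-\<sigma>) * (1 + (norm x)\<^sup>2) powr (-\<sigma>)) \<le> 2 powr \<sigma> * (\<Prod>b\<in>Basis. (1+\<bar>x \<bullet> b\<bar>) powr (-\<sigma>))"
      by (intro mult_left_mono) auto
    moreover have "2 powr \<sigma> * (2 powr (-\<sigma>) * (1 + (norm x)\<^sup>2) powr (-\<sigma>)) = (1 + (norm x)\<^sup>2) powr (-\<sigma>)"
      by (simp add: powr_minus)
    ultimately show ?thesis by simp
  qed
  have "(\<integral>\<^sup>+(x::real^2). ennreal ((1 + (norm x)\<^sup>2) powr (-\<sigma>)) \<partial>lborel)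
     \<le> (\<integral>\<^sup>+(x::real^2). ennreal (2 powr \<sigma>) * ennreal (\<Prod>b\<in>Basis. (1+\<bar>x \<bullet> b\<bar>) powr (-\<sigma>)) \<partial>lborel)"
    by (intro nn_integral_mono) (auto simp: pw ennreal_mult[symmetric] prod_nonneg intro!: ennreal_leI)
  also have "\<dots> = ennreal (2 powr \<sigma>) * (\<integral>\<^sup>+(x::real^2). ennreal (\<Prod>b\<in>Basis. (1+\<bar>x \<bullet> b\<bar>) powr (-\<sigma>)) \<partial>lborel)"
    by (intro nn_integral_cmult) measurable
  also have "(\<integral>\<^sup>+(x::real^2). ennreal (\<Prod>b\<in>Basis. (1+\<bar>x \<bullet> b\<bar>) powr (-\<sigma>)) \<partial>lborel)
      = (\<Prod>b\<in>(Basis::(real^2) set). (\<integral>\<^sup>+t. ennreal ((1+\<bar>t\<bar>) powr (-\<sigma>)) \<partial>lborel))"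
  proof -
    have "(\<integral>\<^sup>+(x::real^2). (\<Prod>b\<in>Basis. (\<lambda>b t. ennreal ((1+\<bar>t\<bar>) powr (-\<sigma>))) b (x \<bullet> b)) \<partial>lborel)
      = (\<Prod>b\<in>(Basis::(real^2) set). (\<integral>\<^sup>+t. (\<lambda>b t. ennreal ((1+\<bar>t\<bar>) powr (-\<sigma>))) b t \<partial>lborel))"
      by (rule nn_integral_lborel_prod) auto
    then show ?thesis by (subst (asm) prod_ennreal) auto
  qed
  finally have le: "(\<integral>\<^sup>+(x::real^2). ennreal ((1 + (norm x)\<^sup>2) powr (-\<sigma>)) \<partial>lborel)
     \<le> ennreal (2 powr \<sigma>) * (\<Prod>b\<in>(Basis::(real^2) set). (\<integral>\<^sup>+t. ennreal ((1+\<bar>t\<bar>) powr (-\<sigma>)) \<partial>lborel))" .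
  have "ennreal (2 powr \<sigma>) * (\<Prod>b\<in>(Basis::(real^2) set). (\<integral>\<^sup>+t. ennreal ((1+\<bar>t\<bar>) powr (-\<sigma>)) \<partial>lborel)) < \<infinity>"
    using R1[OF assms] by (simp add: ennreal_mult_less_top power2_eq_square)
  with le show ?thesis by (rule le_less_trans)
qed

lemma H2:
  assumes "0 \<le> \<alpha>" "\<alpha> < 2"
  shows "(\<integral>\<^sup>+(z::real^2). ennreal (indicator {z. norm z < 1} z * norm z powr (-\<alpha>)) \<partial>lborel) < \<infinity>"
proof -
  define g where "g = (\<lambda>t::real. indicator {-1..1} t * \<bar>t\<bar> powr (-(\<alpha>/2)))"
  have pw: "indicator {z. norm z < 1} z * norm z powr (-\<alpha>) \<le> (\<Prod>b\<in>Basis. g (z \<bullet> b))"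
    if nz: "\<forall>b\<in>Basis. z \<bullet> b \<noteq> 0" for z :: "real^2"
  proof (cases "norm z < 1")
    case False
    then show ?thesis by (simp add: g_def prod_nonneg)
  next
    case True
    have "norm z powr (-\<alpha>) = (\<Prod>b\<in>(Basis::(real^2) set). norm z powr (-(\<alpha>/2)))"
    proof -
      have "(\<Prod>b\<in>(Basis::(real^2) set). norm z powr (-(\<alpha>/2))) = (norm z powr (-(\<alpha>/2)))^2" by simp
      also have "\<dots> = norm z powr (-\<alpha>)"
        by (simp add: powr_powr[symmetric] power2_eq_square powr_add[symmetric])
      finally show ?thesis ..
    qed
    also have "\<dots> \<le> (\<Prod>b\<in>Basis. g (z \<bullet> b))"
    proof (intro prod_mono conjI)
      fix b :: "real^2" assume b: "b \<in> Basis"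
      have le: "\<bar>z \<bullet> b\<bar> \<le> norm z" using b by (simp add: Basis_le_norm)
      have "\<bar>z \<bullet> b\<bar> > 0" using nz b by auto
      then have "norm z powr (-(\<alpha>/2)) \<le> \<bar>z \<bullet> b\<bar> powr (-(\<alpha>/2))"
        using le assms by (intro powr_mono2') auto
      moreover have "z \<bullet> b \<in> {-1..1}" using le True by auto
      ultimately show "norm z powr (-(\<alpha>/2)) \<le> g (z \<bullet> b)" by (simp add: g_def)
    qed simp
    finally show ?thesis using True by simp
  qed
  have "(\<integral>\<^sup>+(z::real^2). ennreal (indicator {z. norm z < 1} z * norm z powr (-\<alpha>)) \<partial>lborel)
     \<le> (\<integral>\<^sup>+(z::real^2). (\<Prod>b\<in>Basis. (\<lambda>b t. ennreal (g t)) b (z \<bullet> b)) \<partial>lborel)"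
  proof (intro nn_integral_mono_AE)
    show "AE (z::real^2) in lborel. ennreal (indicator {z. norm z < 1} z * norm z powr (-\<alpha>)) \<le> (\<Prod>b\<in>Basis. (\<lambda>b t. ennreal (g t)) b (z \<bullet> b))"
      using AE_coords_nonzero[where 'a="real^2"]
    proof eventually_elim
      case (elim z)
      have "ennreal (indicator {z. norm z < 1} z * norm z powr (-\<alpha>)) \<le> ennreal (\<Prod>b\<in>Basis. g (z \<bullet> b))"
        using pw[OF elim] by (rule ennreal_leI)
      also have "\<dots> = (\<Prod>b\<in>Basis. ennreal (g (z \<bullet> b)))"
        by (subst prod_ennreal) (auto simp: g_def)
      finally show ?case by simp
    qed
  qed
  also have "\<dots> = (\<Prod>b\<in>(Basis::(real^2) set). (\<integral>\<^sup>+t. (\<lambda>b t. ennreal (g t)) b t \<partial>lborel))"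
    by (rule nn_integral_lborel_prod) (auto simp: g_def)
  finally have le: "(\<integral>\<^sup>+(z::real^2). ennreal (indicator {z. norm z < 1} z * norm z powr (-\<alpha>)) \<partial>lborel)
     \<le> (\<Prod>b\<in>(Basis::(real^2) set). (\<integral>\<^sup>+t. ennreal (g t) \<partial>lborel))" by simp
  have "(\<integral>\<^sup>+t. ennreal (g t) \<partial>lborel) < \<infinity>"
    unfolding g_def using assms by (intro R2) auto
  then have "(\<Prod>b\<in>(Basis::(real^2) set). (\<integral>\<^sup>+t. ennreal (g t) \<partial>lborel)) < \<infinity>"
    by (simp add: ennreal_mult_less_top power2_eq_square)
  with le show ?thesis by (rule le_less_trans)
qed

definition w2 :: "real \<Rightarrow> real^2 \<Rightarrow> real" where
  "w2 s x = (1 + (norm x)\<^sup>2) powr (-s)"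

definition PP :: "real \<Rightarrow> real^2 \<Rightarrow> real" where
  "PP \<alpha> z = 1 + norm z powr (2*\<alpha>) + norm z powr (-\<alpha>)"

lemma one_plus_sq_pos: "1 + (norm (x::'a::real_normed_vector))\<^sup>2 > 0"
  by (metis add_pos_nonneg zero_le_power2 zero_less_one)

lemma powr_neg_le1: "1 \<le> (x::real) \<Longrightarrow> 0 \<le> a \<Longrightarrow> x powr (-a) \<le> 1"
  by (simp add: powr_minus ge_one_powr_ge_zero divide_simps)

lemma w2_pos: "w2 s x > 0" using one_plus_sq_pos[of x] by (simp add: w2_def)
lemma w2_le1: "s \<ge> 0 \<Longrightarrow> w2 s x \<le> 1"
  unfolding w2_def by (rule powr_neg_le1) auto

lemma w2_measurable[measurable]: "w2 s \<in> borel_measurable borel"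
  unfolding w2_def by measurable

lemma PP_measurable[measurable]: "PP a \<in> borel_measurable borel"
  unfolding PP_def by measurable

lemma PP_nonneg: "PP a z \<ge> 0" by (simp add: PP_def add_nonneg_nonneg)

lemma JP_finite:
  assumes s: "s > 1" and a: "0 < \<alpha>" "\<alpha> \<le> 1" "2*\<alpha> \<le> s - 1"
  shows "(\<integral>\<^sup>+x. \<integral>\<^sup>+y. ennreal (w2 s x * w2 s y * PP \<alpha> (x - y)) \<partial>lborel \<partial>lborel) < \<infinity>"
proof -
  define h where "h = (\<lambda>z::real^2. indicator {z. norm z < 1} z * norm z powr (-\<alpha>))"
  have h_meas[measurable]: "h \<in> borel_measurable borel" unfolding h_def by measurable
  have h_nn: "h z \<ge> 0" for z unfolding h_def by simp
  define Is where "Is = (\<integral>\<^sup>+(x::real^2). ennreal (w2 s x) \<partial>lborel)"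
  define Is' where "Is' = (\<integral>\<^sup>+(x::real^2). ennreal (w2 (s-\<alpha>) x) \<partial>lborel)"
  define H where "H = (\<integral>\<^sup>+(z::real^2). ennreal (h z) \<partial>lborel)"
  have Is: "Is < \<infinity>" unfolding Is_def w2_def using I2 s by simp
  have Is': "Is' < \<infinity>" unfolding Is'_def w2_def using I2[of "s-\<alpha>"] s a by simp
  have H: "H < \<infinity>" unfolding H_def h_def using H2[of \<alpha>] a by simp
  have pw: "w2 s x * w2 s y * PP \<alpha> (x - y) \<le> 2 * (w2 s x * w2 s y) + w2 (s-\<alpha>) x * w2 (s-\<alpha>) y + w2 s x * h (x - y)"
    for x y :: "real^2"
  proof -
    have t1: "norm (x - y) powr (2*\<alpha>) \<le> ((1 + (norm x)\<^sup>2) * (1 + (norm y)\<^sup>2)) powr \<alpha>"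
    proof -
      have "norm (x - y) \<le> norm x + norm y" by (rule norm_triangle_ineq4)
      then have "(norm (x - y))\<^sup>2 \<le> (norm x + norm y)\<^sup>2"
        by (intro power_mono) auto
      also have "\<dots> \<le> (1 + (norm x)\<^sup>2) * (1 + (norm y)\<^sup>2)"
      proof -
        have "0 \<le> (norm x * norm y - 1)\<^sup>2" by simp
        then show ?thesis by (simp add: power2_eq_square algebra_simps)
      qed
      finally have sq: "(norm (x - y))\<^sup>2 \<le> (1 + (norm x)\<^sup>2) * (1 + (norm y)\<^sup>2)" .
      have "norm (x - y) powr (2*\<alpha>) = ((norm (x - y))\<^sup>2) powr \<alpha>"
      proof (cases "x = y")
        case False
        then have "norm (x - y) > 0" by simp
        then have e: "(norm (x - y))\<^sup>2 = norm (x - y) powr 2" by (simp add: powr_realpow)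
        have "(norm (x - y))\<^sup>2 powr \<alpha> = (norm (x - y) powr 2) powr \<alpha>" by (simp only: e)
        also have "\<dots> = norm (x - y) powr (2*\<alpha>)" by (simp only: powr_powr)
        finally show ?thesis ..
      qed simp
      also have "\<dots> \<le> ((1 + (norm x)\<^sup>2) * (1 + (norm y)\<^sup>2)) powr \<alpha>"
        using sq a by (intro powr_mono2) auto
      finally show ?thesis .
    qed
    have t1': "w2 s x * w2 s y * norm (x - y) powr (2*\<alpha>) \<le> w2 (s-\<alpha>) x * w2 (s-\<alpha>) y"
    proof -
      have "w2 s x * w2 s y * norm (x - y) powr (2*\<alpha>) \<le> w2 s x * w2 s y * ((1 + (norm x)\<^sup>2) * (1 + (norm y)\<^sup>2)) powr \<alpha>"
        using t1 w2_pos[of s x] w2_pos[of s y] by (intro mult_left_mono) auto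
      also have "\<dots> = w2 (s-\<alpha>) x * w2 (s-\<alpha>) y"
      proof -
        have e: "c powr (-s) * c powr \<alpha> = c powr (-(s-\<alpha>))" if "c > 0" for c :: real
          using that by (simp add: powr_add[symmetric])
        have "((1 + (norm x)\<^sup>2) * (1 + (norm y)\<^sup>2)) powr \<alpha> = (1 + (norm x)\<^sup>2) powr \<alpha> * (1 + (norm y)\<^sup>2) powr \<alpha>"
          using one_plus_sq_pos[of x] one_plus_sq_pos[of y] by (intro powr_mult)
        then show ?thesis unfolding w2_def
          using e[OF one_plus_sq_pos[of x]] e[OF one_plus_sq_pos[of y]] by (simp add: mult_ac)
      qed
      finally show ?thesis .
    qed
    have t2: "norm (x - y) powr (-\<alpha>) \<le> 1 + h (x - y)"
    proof (cases "norm (x - y) < 1")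
      case True then show ?thesis by (simp add: h_def)
    next
      case False
      then have "norm (x - y) powr (-\<alpha>) \<le> 1"
        using a by (intro powr_neg_le1) auto
      then show ?thesis using h_nn[of "x-y"] by simp
    qed
    have t2': "w2 s x * w2 s y * norm (x - y) powr (-\<alpha>) \<le> w2 s x * w2 s y + w2 s x * h (x - y)"
    proof -
      have "w2 s x * w2 s y * norm (x - y) powr (-\<alpha>) \<le> w2 s x * w2 s y * (1 + h (x - y))"
        using t2 w2_pos[of s x] w2_pos[of s y] by (intro mult_left_mono) auto
      also have "\<dots> = w2 s x * w2 s y + w2 s x * (w2 s y * h (x - y))" by (simp add: algebra_simps)
      also have "\<dots> \<le> w2 s x * w2 s y + w2 s x * h (x - y)"
        using w2_le1[of s y] s h_nn[of "x-y"] w2_pos[of s x]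
        by (intro add_left_mono mult_left_mono) (auto intro: mult_left_le_one_le w2_pos less_imp_le)
      finally show ?thesis .
    qed
    show ?thesis using t1' t2' unfolding PP_def by (simp add: algebra_simps)
  qed
  have "(\<integral>\<^sup>+x. \<integral>\<^sup>+y. ennreal (w2 s x * w2 s y * PP \<alpha> (x - y)) \<partial>lborel \<partial>lborel)
     \<le> (\<integral>\<^sup>+x. \<integral>\<^sup>+y. ennreal (2 * w2 s x) * ennreal (w2 s y) + ennreal (w2 (s-\<alpha>) x) * ennreal (w2 (s-\<alpha>) y)
            + ennreal (w2 s x) * ennreal (h (x - y)) \<partial>lborel \<partial>lborel)"
  proof (intro nn_integral_mono)
    fix x y :: "real^2"
    have "ennreal (w2 s x * w2 s y * PP \<alpha> (x - y)) \<le> ennreal (2 * (w2 s x * w2 s y) + w2 (s-\<alpha>) x * w2 (s-\<alpha>) y + w2 s x * h (x - y))"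
      by (rule ennreal_leI[OF pw])
    also have "\<dots> = ennreal (2 * w2 s x) * ennreal (w2 s y) + ennreal (w2 (s-\<alpha>) x) * ennreal (w2 (s-\<alpha>) y)
            + ennreal (w2 s x) * ennreal (h (x - y))"
      using w2_pos[of s x] w2_pos[of s y] w2_pos[of "s-\<alpha>" x] w2_pos[of "s-\<alpha>" y] h_nn[of "x-y"]
      by (simp add: ennreal_plus[symmetric] ennreal_mult[symmetric] del: ennreal_plus)
    finally show "ennreal (w2 s x * w2 s y * PP \<alpha> (x - y)) \<le> \<dots>" .
  qed
  also have "\<dots> = (\<integral>\<^sup>+x. ennreal (2 * w2 s x) * Is + ennreal (w2 (s-\<alpha>) x) * Is' + ennreal (w2 s x) * H \<partial>lborel)"
  proof (intro nn_integral_cong)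
    fix x :: "real^2"
    have "(\<integral>\<^sup>+y. ennreal (2 * w2 s x) * ennreal (w2 s y) + ennreal (w2 (s-\<alpha>) x) * ennreal (w2 (s-\<alpha>) y)
            + ennreal (w2 s x) * ennreal (h (x - y)) \<partial>lborel)
      = (\<integral>\<^sup>+y. ennreal (2 * w2 s x) * ennreal (w2 s y) + ennreal (w2 (s-\<alpha>) x) * ennreal (w2 (s-\<alpha>) y) \<partial>lborel)
        + (\<integral>\<^sup>+y. ennreal (w2 s x) * ennreal (h (x - y)) \<partial>lborel)"
      by (intro nn_integral_add) auto
    also have "(\<integral>\<^sup>+y. ennreal (2 * w2 s x) * ennreal (w2 s y) + ennreal (w2 (s-\<alpha>) x) * ennreal (w2 (s-\<alpha>) y) \<partial>lborel)
       = (\<integral>\<^sup>+y. ennreal (2 * w2 s x) * ennreal (w2 s y) \<partial>lborel) + (\<integral>\<^sup>+y. ennreal (w2 (s-\<alpha>) x) * ennreal (w2 (s-\<alpha>) y) \<partial>lborel)"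
      by (intro nn_integral_add) auto
    also have "(\<integral>\<^sup>+y. ennreal (2 * w2 s x) * ennreal (w2 s y) \<partial>lborel) = ennreal (2 * w2 s x) * Is"
      unfolding Is_def by (intro nn_integral_cmult) auto
    also have "(\<integral>\<^sup>+y. ennreal (w2 (s-\<alpha>) x) * ennreal (w2 (s-\<alpha>) y) \<partial>lborel) = ennreal (w2 (s-\<alpha>) x) * Is'"
      unfolding Is'_def by (intro nn_integral_cmult) auto
    also have "(\<integral>\<^sup>+y. ennreal (w2 s x) * ennreal (h (x - y)) \<partial>lborel) = ennreal (w2 s x) * (\<integral>\<^sup>+y. ennreal (h (x - y)) \<partial>lborel)"
      by (intro nn_integral_cmult) auto
    also have "(\<integral>\<^sup>+y. ennreal (h (x - y)) \<partial>lborel) = H"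
      unfolding H_def by (rule nn_integral_reflect_translate) measurable
    finally show "(\<integral>\<^sup>+y. ennreal (2 * w2 s x) * ennreal (w2 s y) + ennreal (w2 (s-\<alpha>) x) * ennreal (w2 (s-\<alpha>) y)
            + ennreal (w2 s x) * ennreal (h (x - y)) \<partial>lborel) = ennreal (2 * w2 s x) * Is + ennreal (w2 (s-\<alpha>) x) * Is' + ennreal (w2 s x) * H" .
  qed
  also have "\<dots> = (\<integral>\<^sup>+x. ennreal (2 * w2 s x) * Is + ennreal (w2 (s-\<alpha>) x) * Is' \<partial>lborel) + (\<integral>\<^sup>+x. ennreal (w2 s x) * H \<partial>lborel)"
    by (intro nn_integral_add) auto
  also have "(\<integral>\<^sup>+x. ennreal (2 * w2 s x) * Is + ennreal (w2 (s-\<alpha>) x) * Is' \<partial>lborel)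
     = (\<integral>\<^sup>+x. ennreal (2 * w2 s x) * Is \<partial>lborel) + (\<integral>\<^sup>+x. ennreal (w2 (s-\<alpha>) x) * Is' \<partial>lborel)"
    by (intro nn_integral_add) auto
  also have "(\<integral>\<^sup>+x. ennreal (2 * w2 s x) * Is \<partial>lborel) = 2 * Is * Is"
  proof -
    have "(\<integral>\<^sup>+x. ennreal (2 * w2 s x) * Is \<partial>lborel) = (\<integral>\<^sup>+x. ennreal (w2 s x) * (2 * Is) \<partial>lborel)"
      using w2_pos[of s] by (intro nn_integral_cong) (simp add: ennreal_mult less_imp_le mult_ac)
    also have "\<dots> = Is * (2 * Is)" unfolding Is_def by (rule nn_integral_multc) auto
    finally show ?thesis by (simp add: mult_ac)
  qed
  also have "(\<integral>\<^sup>+x. ennreal (w2 (s-\<alpha>) x) * Is' \<partial>lborel) = Is' * Is'"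
    unfolding Is'_def by (rule nn_integral_multc) auto
  also have "(\<integral>\<^sup>+x. ennreal (w2 s x) * H \<partial>lborel) = Is * H"
    unfolding Is_def by (rule nn_integral_multc) auto
  finally have le: "(\<integral>\<^sup>+x. \<integral>\<^sup>+y. ennreal (w2 s x * w2 s y * PP \<alpha> (x - y)) \<partial>lborel \<partial>lborel) \<le> 2 * Is * Is + Is' * Is' + Is * H" .
  have "2 * Is * Is + Is' * Is' + Is * H < \<infinity>"
    using Is Is' H by (simp add: ennreal_mult_less_top)
  with le show ?thesis by (rule le_less_trans)
qed




lemma FTC_nn:
  fixes f F :: "real \<Rightarrow> real"
  assumes "a \<le> b" and d: "\<And>x. x \<in> {a..b} \<Longrightarrow> (F has_real_derivative f x) (at x)"
    and nn: "\<And>x. x \<in> {a..b} \<Longrightarrow> 0 \<le> f x"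
  shows "(\<integral>\<^sup>+t. ennreal (f t) * indicator {a..b} t \<partial>lborel) = ennreal (F b - F a)"
proof -
  have "(f has_integral (F b - F a)) {a..b}"
    using assms(1) d by (intro fundamental_theorem_of_calculus)
      (auto simp: has_real_derivative_iff_has_vector_derivative[symmetric] intro: has_field_derivative_at_within)
  from nn_integral_has_integral_lebesgue[OF nn this]
  have "(\<integral>\<^sup>+t. ennreal (indicator {a..b} t * f t) \<partial>lborel) = ennreal (F b - F a)" by simp
  moreover have "\<And>t. ennreal (indicator {a..b} t * f t) = ennreal (f t) * indicator {a..b} t"
    by (auto simp: indicator_def)
  ultimately show ?thesis by simp
qed

lemma min_le_tpow:
  fixes t \<alpha> :: real
  assumes "0 < t" "0 < \<alpha>" "\<alpha> \<le> 1"
  shows "min 1 (1/t) \<le> t powr (\<alpha> - 1)"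
proof (cases "t \<le> 1")
  case True
  have "t powr (1 - \<alpha>) \<le> 1" using True assms by (intro powr_le1) auto
  then have "1 \<le> t powr (\<alpha> - 1)" using assms
  proof -
    have "t powr (\<alpha> - 1) = 1 / t powr (1 - \<alpha>)"
      using assms by (simp add: powr_minus_divide[symmetric])
    moreover have "t powr (1 - \<alpha>) > 0" using assms by simp
    ultimately show ?thesis using \<open>t powr (1 - \<alpha>) \<le> 1\<close> by (simp add: le_divide_eq_1_pos)
  qed
  then show ?thesis by simp
next
  case False
  have "t powr (-1) \<le> t powr (\<alpha> - 1)" using False assms by (intro powr_mono) auto
  moreover have "t powr (-1) = 1/t" using assms by (simp add: powr_minus_divide)
  ultimately show ?thesis using min.cobounded2[of 1 "1/t"] by linarith
qed

lemma exp_neg_le_tpow: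
  fixes t \<alpha> :: real
  assumes "0 < t" "0 < \<alpha>" "\<alpha> \<le> 1"
  shows "exp (-t) \<le> t powr (\<alpha> - 1)"
proof -
  have "exp (-t) \<le> 1" using assms by (simp add: exp_le_one_iff)
  moreover have "exp (-t) \<le> 1/t"
  proof -
    have "t \<le> exp t" using exp_ge_add_one_self[of t] by linarith
    then show ?thesis using assms by (simp add: exp_minus divide_simps)
  qed
  ultimately have "exp (-t) \<le> min 1 (1/t)" by (rule min.boundedI)
  with min_le_tpow[OF assms] show ?thesis by linarith
qed

lemma inv_le_tpow:
  fixes t \<alpha> :: real
  assumes "0 < t" "0 < \<alpha>" "\<alpha> \<le> 1"
  shows "1/t \<le> exp (-t)/t + t powr (\<alpha> - 1)"
proof -
  have "(1 - exp (-t))/t \<le> 1/t" using assms by (intro divide_right_mono) auto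
  moreover have "(1 - exp (-t))/t \<le> 1"
  proof -
    have "1 - t \<le> exp (-t)" using exp_ge_add_one_self[of "-t"] by simp
    then show ?thesis using assms by (simp add: divide_simps)
  qed
  ultimately have "(1 - exp (-t))/t \<le> min 1 (1/t)" by (intro min.boundedI)
  with min_le_tpow[OF assms] have "(1 - exp (-t))/t \<le> t powr (\<alpha> - 1)" by linarith
  then show ?thesis by (simp add: diff_divide_distrib)
qed

lemma cosh_borel: "(cosh :: real \<Rightarrow> real) \<in> borel_measurable borel"
  by (intro borel_measurable_continuous_onI continuous_intros)
lemma sinh_borel: "(sinh :: real \<Rightarrow> real) \<in> borel_measurable borel"
  by (intro borel_measurable_continuous_onI continuous_intros)
lemma cosh_measurable[measurable (raw)]: "f \<in> borel_measurable M \<Longrightarrow> (\<lambda>x. cosh (f x) :: real) \<in> borel_measurable M"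
  using measurable_comp[OF _ cosh_borel] by (simp add: comp_def)
lemma sinh_measurable[measurable (raw)]: "f \<in> borel_measurable M \<Longrightarrow> (\<lambda>x. sinh (f x) :: real) \<in> borel_measurable M"
  using measurable_comp[OF _ sinh_borel] by (simp add: comp_def)

lemma exp_lin_int:
  assumes "c > 0"
  shows "(\<integral>\<^sup>+u. ennreal (exp (-c*u)) * indicator {0..} u \<partial>lborel) = ennreal (1/c)"
proof -
  define F where "F = (\<lambda>u::real. - exp (-c*u) / c)"
  have "(\<integral>\<^sup>+u. ennreal (exp (-c*u)) * indicator {0..} u \<partial>lborel) = 0 - F 0"
  proof (rule nn_integral_FTC_atLeast)
    show "(F \<longlongrightarrow> 0) at_top" unfolding F_def using assms by real_asymp
    fix x :: real assume "0 \<le> x"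
    show "(F has_real_derivative exp (-c*x)) (at x)"
      unfolding F_def using assms by (auto intro!: derivative_eq_intros simp: field_simps)
  qed auto
  then show ?thesis by (simp add: F_def)
qed

lemma cosh_ge_half: "(u::real) \<ge> 0 \<Longrightarrow> u/2 \<le> cosh u"
proof -
  assume "u \<ge> 0"
  have "1 + u \<le> exp u" by (rule exp_ge_add_one_self)
  moreover have "0 < exp (-u)" by simp
  ultimately have "u \<le> exp u + exp (-u)" using \<open>u \<ge> 0\<close> by linarith
  then show ?thesis by (simp add: cosh_def)
qed

lemma cosh_ge_one': "1 \<le> cosh (u::real)" by (rule cosh_real_ge_1)

lemma cosh_eq_sinh_exp: "cosh (u::real) = sinh u + exp (-u)"
  by (simp add: cosh_def sinh_def field_simps)

definition KK :: "real \<Rightarrow> ennreal" where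
  "KK a = (\<integral>\<^sup>+u. ennreal (exp (-a * cosh u)) * indicator {0..} u \<partial>lborel)"

definition K1 :: "real \<Rightarrow> ennreal" where
  "K1 a = (\<integral>\<^sup>+u. ennreal (cosh u * exp (-a * cosh u)) * indicator {0..} u \<partial>lborel)"

lemma KK_finite:
  assumes "a > 0" shows "KK a < \<infinity>"
proof -
  have "KK a \<le> (\<integral>\<^sup>+u. ennreal (exp (-(a/2)*u)) * indicator {0..} u \<partial>lborel)"
    unfolding KK_def
  proof (intro nn_integral_mono)
    fix u :: real
    show "ennreal (exp (-a * cosh u)) * indicator {0..} u \<le> ennreal (exp (-(a/2)*u)) * indicator {0..} u"
    proof (cases "u \<ge> 0")
      case True
      then have "a * (u/2) \<le> a * cosh u" using cosh_ge_half[OF True] assms by (intro mult_left_mono) auto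
      then have "exp (-a * cosh u) \<le> exp (-(a/2)*u)" by simp
      then show ?thesis using True by (auto intro: ennreal_leI)
    qed auto
  qed
  also have "\<dots> = ennreal (1/(a/2))" using assms by (intro exp_lin_int) auto
  finally show ?thesis using le_less_trans by fastforce
qed

lemma K0_eq:
  assumes "a > 0" shows "ennreal (K0 a) = KK a" "K0 a = enn2real (KK a)"
proof -
  have "K0 a = enn2real (\<integral>\<^sup>+t. ennreal (indicator {0..} t * exp (- a * cosh t)) \<partial>lborel)"
    unfolding K0_def by (rule integral_eq_nn_integral) auto
  also have "(\<integral>\<^sup>+t. ennreal (indicator {0..} t * exp (- a * cosh t)) \<partial>lborel) = KK a"
    unfolding KK_def by (intro nn_integral_cong) (auto simp: indicator_def)
  finally show "K0 a = enn2real (KK a)" .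
  then show "ennreal (K0 a) = KK a" using KK_finite[OF assms] by simp
qed

lemma sinh_int:
  assumes "t > 0"
  shows "(\<integral>\<^sup>+u. ennreal (sinh u * exp (-t * cosh u)) * indicator {0..} u \<partial>lborel) = ennreal (exp (-t)/t)"
proof -
  define F where "F = (\<lambda>u::real. - exp (-t * cosh u) / t)"
  have "(\<integral>\<^sup>+u. ennreal (sinh u * exp (-t * cosh u)) * indicator {0..} u \<partial>lborel) = 0 - F 0"
  proof (rule nn_integral_FTC_atLeast)
    show "(F \<longlongrightarrow> 0) at_top" unfolding F_def using assms by real_asymp
    fix x :: real assume x: "0 \<le> x"
    show "(F has_real_derivative sinh x * exp (-t * cosh x)) (at x)"
      unfolding F_def using assms by (auto intro!: derivative_eq_intros simp: field_simps)
    show "0 \<le> sinh x * exp (-t * cosh x)" using x by simp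
  qed measurable
  then show ?thesis by (simp add: F_def)
qed

lemma K1_lower:
  assumes "t > 0" shows "ennreal (exp (-t)/t) \<le> K1 t"
proof -
  have "ennreal (exp (-t)/t) = (\<integral>\<^sup>+u. ennreal (sinh u * exp (-t * cosh u)) * indicator {0..} u \<partial>lborel)"
    using sinh_int[OF assms] by simp
  also have "\<dots> \<le> K1 t" unfolding K1_def
    by (intro nn_integral_mono mult_right_mono ennreal_leI) (auto intro: sinh_le_cosh_real)
  finally show ?thesis .
qed

lemma K1_upper:
  assumes "t > 0" shows "K1 t \<le> ennreal (exp (-t)/t + exp (-t))"
proof -
  have "K1 t = (\<integral>\<^sup>+u. ennreal (sinh u * exp (-t * cosh u)) * indicator {0..} u
                   + ennreal (exp (-u) * exp (-t * cosh u)) * indicator {0..} u \<partial>lborel)"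
    unfolding K1_def
  proof (intro nn_integral_cong)
    fix u :: real
    show "ennreal (cosh u * exp (- t * cosh u)) * indicator {0..} u =
          ennreal (sinh u * exp (-t * cosh u)) * indicator {0..} u + ennreal (exp (-u) * exp (-t * cosh u)) * indicator {0..} u"
      by (cases "u \<ge> 0") (auto simp: cosh_eq_sinh_exp ennreal_plus[symmetric] distrib_right simp del: ennreal_plus)
  qed
  also have "\<dots> = (\<integral>\<^sup>+u. ennreal (sinh u * exp (-t * cosh u)) * indicator {0..} u \<partial>lborel)
                   + (\<integral>\<^sup>+u. ennreal (exp (-u) * exp (-t * cosh u)) * indicator {0..} u \<partial>lborel)"
    by (intro nn_integral_add) auto
  also have "(\<integral>\<^sup>+u. ennreal (exp (-u) * exp (-t * cosh u)) * indicator {0..} u \<partial>lborel)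
     \<le> (\<integral>\<^sup>+u. ennreal (exp (-t)) * (ennreal (exp (-1*u)) * indicator {0..} u) \<partial>lborel)"
  proof (intro nn_integral_mono)
    fix u :: real
    have "exp (-t * cosh u) \<le> exp (-t)" using assms cosh_real_ge_1[of u] by simp
    then have "exp (-u) * exp (-t * cosh u) \<le> exp (-t) * exp (-1*u)" by (simp add: mult.commute)
    then have "ennreal (exp (-u) * exp (-t * cosh u)) \<le> ennreal (exp (-t)) * ennreal (exp (-1*u))"
      by (simp add: ennreal_mult[symmetric] ennreal_leI)
    then show "ennreal (exp (-u) * exp (-t * cosh u)) * indicator {0..} u \<le> ennreal (exp (-t)) * (ennreal (exp (-1*u)) * indicator {0..} u)"
      by (cases "u \<ge> 0") auto
  qed
  also have "\<dots> = ennreal (exp (-t)) * ennreal (1/1)"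
    using exp_lin_int[of 1] by (subst nn_integral_cmult) auto
  finally have "K1 t \<le> ennreal (exp (-t)/t) + ennreal (exp (-t))"
    using sinh_int[OF assms] by (auto intro: add_left_mono order_trans)
  moreover have "ennreal (exp (-t)/t) + ennreal (exp (-t)) = ennreal (exp (-t)/t + exp (-t))"
    using assms by (intro ennreal_plus[symmetric]) auto
  ultimately show ?thesis by simp
qed

lemma KK_split:
  assumes "0 < a" "a \<le> b"
  shows "KK a = KK b + (\<integral>\<^sup>+t. K1 t * indicator {a..b} t \<partial>lborel)"
proof -
  have pt: "ennreal (exp (-a * c)) = ennreal (exp (-b * c)) + (\<integral>\<^sup>+t. ennreal (c * exp (-t * c)) * indicator {a..b} t \<partial>lborel)"
    if c: "c \<ge> 1" for c :: real
  proof -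
    have "(\<integral>\<^sup>+t. ennreal (c * exp (-t * c)) * indicator {a..b} t \<partial>lborel)
        = ennreal ((\<lambda>t. - exp (-t * c)) b - (\<lambda>t. - exp (-t * c)) a)"
    proof (rule FTC_nn)
      fix x assume "x \<in> {a..b}"
      show "((\<lambda>t. - exp (-t * c)) has_real_derivative c * exp (-x * c)) (at x)"
        by (auto intro!: derivative_eq_intros)
      show "0 \<le> c * exp (-x * c)" using c by simp
    qed (use assms in auto)
    moreover have "exp (-b * c) \<le> exp (-a * c)" using assms c by (simp add: mult_right_mono)
    ultimately show ?thesis by (simp add: ennreal_plus[symmetric] del: ennreal_plus)
  qed
  have "KK a = (\<integral>\<^sup>+u. (ennreal (exp (-b * cosh u)) + (\<integral>\<^sup>+t. ennreal (cosh u * exp (-t * cosh u)) * indicator {a..b} t \<partial>lborel)) * indicator {0..} u \<partial>lborel)"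
    unfolding KK_def by (intro nn_integral_cong) (simp only: pt[OF cosh_real_ge_1])
  also have "\<dots> = (\<integral>\<^sup>+u. ennreal (exp (-b * cosh u)) * indicator {0..} u + (\<integral>\<^sup>+t. ennreal (cosh u * exp (-t * cosh u)) * indicator {a..b} t \<partial>lborel) * indicator {0..} u \<partial>lborel)"
    by (intro nn_integral_cong) (simp add: distrib_right)
  also have "\<dots> = KK b + (\<integral>\<^sup>+u. (\<integral>\<^sup>+t. ennreal (cosh u * exp (-t * cosh u)) * indicator {a..b} t \<partial>lborel) * indicator {0..} u \<partial>lborel)"
    unfolding KK_def by (intro nn_integral_add) auto
  also have "(\<integral>\<^sup>+u. (\<integral>\<^sup>+t. ennreal (cosh u * exp (-t * cosh u)) * indicator {a..b} t \<partial>lborel) * indicator {0..} u \<partial>lborel)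
      = (\<integral>\<^sup>+u. (\<integral>\<^sup>+t. ennreal (cosh u * exp (-t * cosh u)) * indicator {a..b} t * indicator {0..} u \<partial>lborel) \<partial>lborel)"
    by (intro nn_integral_cong) (simp add: nn_integral_multc)
  also have "\<dots> = (\<integral>\<^sup>+t. (\<integral>\<^sup>+u. ennreal (cosh u * exp (-t * cosh u)) * indicator {a..b} t * indicator {0..} u \<partial>lborel) \<partial>lborel)"
    by (rule lborel_pair.Fubini') measurable
  also have "\<dots> = (\<integral>\<^sup>+t. K1 t * indicator {a..b} t \<partial>lborel)"
    unfolding K1_def
  proof (intro nn_integral_cong)
    fix t :: real
    have "(\<integral>\<^sup>+u. ennreal (cosh u * exp (-t * cosh u)) * indicator {a..b} t * indicator {0..} u \<partial>lborel)
      = (\<integral>\<^sup>+u. (ennreal (cosh u * exp (-t * cosh u)) * indicator {0..} u) * indicator {a..b} t \<partial>lborel)"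
      by (intro nn_integral_cong) (simp add: mult_ac)
    also have "\<dots> = (\<integral>\<^sup>+u. ennreal (cosh u * exp (-t * cosh u)) * indicator {0..} u \<partial>lborel) * indicator {a..b} t"
      by (rule nn_integral_multc) measurable
    finally show "(\<integral>\<^sup>+u. ennreal (cosh u * exp (-t * cosh u)) * indicator {a..b} t * indicator {0..} u \<partial>lborel)
      = (\<integral>\<^sup>+u. ennreal (cosh u * exp (-t * cosh u)) * indicator {0..} u \<partial>lborel) * indicator {a..b} t" .
  qed
  finally show ?thesis .
qed

lemma psi_step:
  assumes ab: "0 < a" "a \<le> b" and al: "0 < \<alpha>" "\<alpha> \<le> 1"
  shows "\<bar>(K0 b + ln b) - (K0 a + ln a)\<bar> \<le> (b powr \<alpha> - a powr \<alpha>)/\<alpha>"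
proof -
  have bpos: "0 < b" using ab by simp
  have dpow: "((\<lambda>t. t powr \<alpha> / \<alpha>) has_real_derivative x powr (\<alpha> - 1)) (at x)" if "0 < x" for x
  proof -
    have "((\<lambda>t. t powr \<alpha>) has_real_derivative \<alpha> * x powr (\<alpha> - 1)) (at x)"
      using that by (rule has_real_derivative_powr)
    then have "((\<lambda>t. t powr \<alpha> / \<alpha>) has_real_derivative \<alpha> * x powr (\<alpha> - 1) / \<alpha>) (at x)"
      by (rule DERIV_cdivide)
    then show ?thesis using al by simp
  qed
  have Ia: "(\<integral>\<^sup>+t. ennreal (1/t + t powr (\<alpha>-1)) * indicator {a..b} t \<partial>lborel)
      = ennreal ((ln b + b powr \<alpha> / \<alpha>) - (ln a + a powr \<alpha> / \<alpha>))"
  proof (rule FTC_nn[where F="\<lambda>t. ln t + t powr \<alpha> / \<alpha>"])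
    fix x assume x: "x \<in> {a..b}"
    then have "0 < x" using ab by simp
    show "((\<lambda>t. ln t + t powr \<alpha> / \<alpha>) has_real_derivative 1/x + x powr (\<alpha>-1)) (at x)"
      using \<open>0 < x\<close> by (intro DERIV_add dpow) (auto intro!: derivative_eq_intros)
    show "0 \<le> 1/x + x powr (\<alpha>-1)" using \<open>0 < x\<close> by simp
  qed (use ab in auto)
  have Ib: "(\<integral>\<^sup>+t. ennreal (t powr (\<alpha>-1)) * indicator {a..b} t \<partial>lborel)
      = ennreal (b powr \<alpha> / \<alpha> - a powr \<alpha> / \<alpha>)"
  proof (rule FTC_nn[where F="\<lambda>t. t powr \<alpha> / \<alpha>"])
    fix x assume x: "x \<in> {a..b}"
    then have "0 < x" using ab by simp
    then show "((\<lambda>t. t powr \<alpha> / \<alpha>) has_real_derivative x powr (\<alpha>-1)) (at x)" by (rule dpow)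
  qed (use ab in auto)
  have Ic: "(\<integral>\<^sup>+t. ennreal (1/t) * indicator {a..b} t \<partial>lborel) = ennreal (ln b - ln a)"
  proof (rule FTC_nn[where F="\<lambda>t. ln t"])
    fix x assume x: "x \<in> {a..b}"
    then have "0 < x" using ab by simp
    then show "(ln has_real_derivative 1/x) (at x)" by (auto intro!: derivative_eq_intros)
    show "0 \<le> 1/x" using \<open>0 < x\<close> by simp
  qed (use ab in auto)
  have mono_pow: "a powr \<alpha> \<le> b powr \<alpha>" using ab al by (intro powr_mono2) auto
  have mono_ln: "ln a \<le> ln b" using ab by simp
  have dd: "a powr \<alpha> / \<alpha> \<le> b powr \<alpha> / \<alpha>" using mono_pow al by (simp add: divide_right_mono)
  have D1nn: "ln a + a powr \<alpha> / \<alpha> \<le> ln b + b powr \<alpha> / \<alpha>" using dd mono_ln by simp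
  have K0a: "ennreal (K0 a) = KK a" "K0 a \<ge> 0" using K0_eq[OF ab(1)] by auto
  have K0b: "ennreal (K0 b) = KK b" "K0 b \<ge> 0" using K0_eq[OF bpos] by auto
  have "KK a \<le> KK b + (\<integral>\<^sup>+t. ennreal (1/t + t powr (\<alpha>-1)) * indicator {a..b} t \<partial>lborel)"
  proof -
    have "(\<integral>\<^sup>+t. K1 t * indicator {a..b} t \<partial>lborel) \<le> (\<integral>\<^sup>+t. ennreal (1/t + t powr (\<alpha>-1)) * indicator {a..b} t \<partial>lborel)"
    proof (intro nn_integral_mono)
      fix t :: real
      show "K1 t * indicator {a..b} t \<le> ennreal (1/t + t powr (\<alpha>-1)) * indicator {a..b} t"
      proof (cases "t \<in> {a..b}")
        case True
        then have t: "0 < t" using ab by simp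
        have "exp (-t)/t + exp (-t) \<le> 1/t + t powr (\<alpha>-1)"
          using exp_neg_le_tpow[OF t al] t by (intro add_mono divide_right_mono) auto
        then have "K1 t \<le> ennreal (1/t + t powr (\<alpha>-1))"
          using K1_upper[OF t] by (meson ennreal_leI order_trans)
        then show ?thesis using True by simp
      qed simp
    qed
    then show ?thesis using KK_split[OF ab] by (simp add: add_left_mono)
  qed
  then have "ennreal (K0 a) \<le> ennreal (K0 b) + ennreal ((ln b + b powr \<alpha> / \<alpha>) - (ln a + a powr \<alpha> / \<alpha>))"
    using Ia K0a K0b by simp
  also have "\<dots> = ennreal (K0 b + ((ln b + b powr \<alpha> / \<alpha>) - (ln a + a powr \<alpha> / \<alpha>)))"
    using K0b D1nn by (intro ennreal_plus[symmetric]) auto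
  finally have i: "K0 a \<le> K0 b + ((ln b + b powr \<alpha> / \<alpha>) - (ln a + a powr \<alpha> / \<alpha>))"
    by (subst (asm) ennreal_le_iff) (use K0b D1nn in auto)
  have "KK b + (\<integral>\<^sup>+t. ennreal (1/t) * indicator {a..b} t \<partial>lborel) \<le> KK a + (\<integral>\<^sup>+t. ennreal (t powr (\<alpha>-1)) * indicator {a..b} t \<partial>lborel)"
  proof -
    have "(\<integral>\<^sup>+t. ennreal (1/t) * indicator {a..b} t \<partial>lborel)
        \<le> (\<integral>\<^sup>+t. K1 t * indicator {a..b} t + ennreal (t powr (\<alpha>-1)) * indicator {a..b} t \<partial>lborel)"
    proof (intro nn_integral_mono)
      fix t :: real
      show "ennreal (1/t) * indicator {a..b} t \<le> K1 t * indicator {a..b} t + ennreal (t powr (\<alpha>-1)) * indicator {a..b} t"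
      proof (cases "t \<in> {a..b}")
        case True
        then have t: "0 < t" using ab by simp
        have "ennreal (1/t) \<le> ennreal (exp (-t)/t + t powr (\<alpha>-1))"
          using inv_le_tpow[OF t al] by (rule ennreal_leI)
        also have "\<dots> = ennreal (exp (-t)/t) + ennreal (t powr (\<alpha>-1))"
          using t by (intro ennreal_plus) auto
        also have "\<dots> \<le> K1 t + ennreal (t powr (\<alpha>-1))"
          using K1_lower[OF t] by (rule add_right_mono)
        finally show ?thesis using True by simp
      qed simp
    qed
    also have "\<dots> = (\<integral>\<^sup>+t. K1 t * indicator {a..b} t \<partial>lborel) + (\<integral>\<^sup>+t. ennreal (t powr (\<alpha>-1)) * indicator {a..b} t \<partial>lborel)"
    proof (rule nn_integral_add)
      show "(\<lambda>t. K1 t * indicator {a..b} t) \<in> borel_measurable lborel"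
      proof -
        have "(\<lambda>t. K1 t) \<in> borel_measurable lborel"
          unfolding K1_def by measurable
        then show ?thesis by measurable
      qed
    qed measurable
    finally have "KK b + (\<integral>\<^sup>+t. ennreal (1/t) * indicator {a..b} t \<partial>lborel)
        \<le> KK b + ((\<integral>\<^sup>+t. K1 t * indicator {a..b} t \<partial>lborel) + (\<integral>\<^sup>+t. ennreal (t powr (\<alpha>-1)) * indicator {a..b} t \<partial>lborel))"
      by (rule add_left_mono)
    also have "\<dots> = KK a + (\<integral>\<^sup>+t. ennreal (t powr (\<alpha>-1)) * indicator {a..b} t \<partial>lborel)"
      using KK_split[OF ab] by (simp add: add.assoc)
    finally show ?thesis .
  qed
  then have "ennreal (K0 b) + ennreal (ln b - ln a) \<le> ennreal (K0 a) + ennreal (b powr \<alpha> / \<alpha> - a powr \<alpha> / \<alpha>)"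
    using Ib Ic K0a K0b by simp
  then have "ennreal (K0 b + (ln b - ln a)) \<le> ennreal (K0 a + (b powr \<alpha> / \<alpha> - a powr \<alpha> / \<alpha>))"
    using K0a K0b dd mono_ln
    by (subst (asm) (1 2) ennreal_plus[symmetric]) auto
  then have ii: "K0 b + (ln b - ln a) \<le> K0 a + (b powr \<alpha> / \<alpha> - a powr \<alpha> / \<alpha>)"
    by (subst (asm) ennreal_le_iff) (use K0a dd in auto)
  have "b powr \<alpha> / \<alpha> - a powr \<alpha> / \<alpha> = (b powr \<alpha> - a powr \<alpha>)/\<alpha>" by (simp add: diff_divide_distrib)
  then show ?thesis using i ii by (simp add: abs_le_iff)
qed

lemma psi_holder:
  fixes a b \<alpha> :: real
  assumes "0 < a" "0 < b" "0 < \<alpha>" "\<alpha> \<le> 1"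
  shows "\<bar>(K0 a + ln a) - (K0 b + ln b)\<bar> \<le> (a powr \<alpha> + b powr \<alpha>)/\<alpha>"
proof (cases "a \<le> b")
  case True
  have "\<bar>(K0 b + ln b) - (K0 a + ln a)\<bar> \<le> (b powr \<alpha> - a powr \<alpha>)/\<alpha>"
    using psi_step[OF assms(1) True assms(3,4)] .
  moreover have "(b powr \<alpha> - a powr \<alpha>)/\<alpha> \<le> (a powr \<alpha> + b powr \<alpha>)/\<alpha>"
    using assms by (intro divide_right_mono) auto
  ultimately show ?thesis by (simp add: abs_minus_commute)
next
  case False
  have "\<bar>(K0 a + ln a) - (K0 b + ln b)\<bar> \<le> (a powr \<alpha> - b powr \<alpha>)/\<alpha>"
    using psi_step[OF assms(2) _ assms(3,4), of a] False by simp
  moreover have "(a powr \<alpha> - b powr \<alpha>)/\<alpha> \<le> (a powr \<alpha> + b powr \<alpha>)/\<alpha>"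
    using assms by (intro divide_right_mono) auto
  ultimately show ?thesis by simp
qed

lemma sq_powr: "(0::real) \<le> r \<Longrightarrow> (r powr g)\<^sup>2 = r powr (2*g)"
proof -
  have "(r powr g)\<^sup>2 = r powr g * r powr g" by (simp only: power2_eq_square)
  also have "\<dots> = r powr (g + g)" by (simp only: powr_add)
  also have "g + g = 2 * g" by simp
  finally show ?thesis .
qed


lemma ln_sq_bound:
  fixes r \<alpha> :: real
  assumes r: "r > 0" and a: "\<alpha> > 0"
  shows "(ln r)\<^sup>2 \<le> 8/\<alpha>\<^sup>2 * (r powr \<alpha> + r powr (-\<alpha>))"
proof -
  define g where "g = \<alpha>/2"
  have g: "g > 0" using a by (simp add: g_def)
  have "g * ln r \<le> r powr g"
    using ln_le_minus_one[of "r powr g"] r by (simp add: ln_powr)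
  moreover have "- (g * ln r) \<le> r powr (-g)"
    using ln_le_minus_one[of "r powr (-g)"] r by (simp add: ln_powr)
  ultimately have "\<bar>g * ln r\<bar> \<le> r powr g + r powr (-g)"
  proof -
    assume h1: "g * ln r \<le> r powr g" and h2: "- (g * ln r) \<le> r powr (-g)"
    have p: "0 \<le> r powr g" "0 \<le> r powr (-g)" by simp_all
    show ?thesis unfolding abs_le_iff using h1 h2 p by (intro conjI; linarith)
  qed
  then have "\<bar>g * ln r\<bar> \<le> \<bar>r powr g + r powr (-g)\<bar>" by simp
  then have "(g * ln r)\<^sup>2 \<le> (r powr g + r powr (-g))\<^sup>2"
    by (simp only: abs_le_square_iff)
  also have "\<dots> \<le> 2 * ((r powr g)\<^sup>2 + (r powr (-g))\<^sup>2)"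
  proof -
    have "0 \<le> (r powr g - r powr (-g))\<^sup>2" by simp
    then show ?thesis by (simp add: power2_eq_square algebra_simps)
  qed
  also have "\<dots> = 2 * (r powr \<alpha> + r powr (-\<alpha>))"
    using r by (simp add: sq_powr g_def)
  finally have "g\<^sup>2 * (ln r)\<^sup>2 \<le> 2 * (r powr \<alpha> + r powr (-\<alpha>))" by (simp add: power_mult_distrib)
  then have "(ln r)\<^sup>2 \<le> 2 * (r powr \<alpha> + r powr (-\<alpha>)) / g\<^sup>2"
    using g by (simp add: pos_le_divide_eq mult.commute)
  also have "\<dots> = 8/\<alpha>\<^sup>2 * (r powr \<alpha> + r powr (-\<alpha>))"
  proof -
    have e: "g\<^sup>2 = \<alpha>\<^sup>2/4" by (simp add: g_def power_divide)
    have "\<And>X. 2 * X / (\<alpha>\<^sup>2/4) = 8/\<alpha>\<^sup>2 * X" using a by (simp add: field_simps)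
    then show ?thesis by (simp only: e)
  qed
  finally show ?thesis .
qed




lemma K0_borel[measurable]: "K0 \<in> borel_measurable borel"
  unfolding K0_def by measurable

lemma kker_borel[measurable]: "kker \<in> borel_measurable borel"
  unfolding kker_def by measurable

lemma gker_borel[measurable]: "(\<lambda>x. gker lam x) \<in> borel_measurable borel"
  unfolding gker_def by measurable

lemma klam_borel[measurable]: "(\<lambda>x. klam lam u x) \<in> borel_measurable borel"
  unfolding klam_def by measurable

lemma rpow_le_PP:
  fixes r \<alpha> :: real
  assumes "r \<ge> 0" "\<alpha> > 0"
  shows "r powr \<alpha> \<le> 1 + r powr (2*\<alpha>)"
proof (cases "r \<le> 1")
  case True
  then have "r powr \<alpha> \<le> 1" using assms by (intro powr_le1) auto
  then show ?thesis by (smt (verit) powr_ge_zero)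
next
  case False
  then have "r powr \<alpha> \<le> r powr (2*\<alpha>)" using assms by (intro powr_mono) auto
  then show ?thesis by simp
qed

lemma kker_bound:
  fixes z :: "real^2" and \<alpha> :: real
  assumes z: "z \<noteq> 0" and a: "\<alpha> > 0"
  shows "(kker z)\<^sup>2 \<le> 2/(pi\<^sup>2 * \<alpha>\<^sup>2) * PP \<alpha> z"
proof -
  define r where "r = norm z"
  have r: "r > 0" using z by (simp add: r_def)
  have "(kker z)\<^sup>2 = (ln r)\<^sup>2 / (4 * pi\<^sup>2)"
    using r by (simp add: kker_def r_def ln_div power2_eq_square field_simps)
  also have "\<dots> \<le> (8/\<alpha>\<^sup>2 * (r powr \<alpha> + r powr (-\<alpha>))) / (4 * pi\<^sup>2)"
    using ln_sq_bound[OF r a] by (intro divide_right_mono) auto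
  also have "\<dots> = 2/(pi\<^sup>2 * \<alpha>\<^sup>2) * (r powr \<alpha> + r powr (-\<alpha>))"
  proof -
    have "\<And>X::real. (8/\<alpha>\<^sup>2 * X) / (4 * pi\<^sup>2) = 2/(pi\<^sup>2 * \<alpha>\<^sup>2) * X" by (simp add: field_simps)
    then show ?thesis by blast
  qed
  also have "\<dots> \<le> 2/(pi\<^sup>2 * \<alpha>\<^sup>2) * PP \<alpha> z"
    using rpow_le_PP[of r \<alpha>] r a unfolding PP_def r_def by (intro mult_left_mono) auto
  finally show ?thesis .
qed

lemma d_bound:
  fixes z u :: "real^2" and lam \<alpha> :: real
  assumes z: "z \<noteq> 0" and u: "norm u = 1" and lam: "lam > 0" and a: "0 < \<alpha>" "\<alpha> \<le> 1"
  shows "(klam lam u z - kker z)\<^sup>2 \<le> lam powr \<alpha> / (pi\<^sup>2 * \<alpha>\<^sup>2) * PP \<alpha> z"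
proof -
  define r where "r = norm z"
  define q where "q = sqrt lam"
  have r: "r > 0" using z by (simp add: r_def)
  have q: "q > 0" using lam by (simp add: q_def)
  define D where "D = (K0 (q*r) + ln (q*r)) - (K0 q + ln q)"
  have eq: "klam lam u z - kker z = D / (2*pi)"
  proof -
    have "ln (q*r) - ln q = ln r" using q r by (simp add: ln_mult)
    moreover have "ln (1/r) = - ln r" using r by (simp add: ln_div)
    ultimately show ?thesis
      unfolding klam_def gker_def kker_def D_def using u
      by (simp add: q_def r_def field_simps)
  qed
  have "\<bar>D\<bar> \<le> ((q*r) powr \<alpha> + q powr \<alpha>)/\<alpha>"
    unfolding D_def using q r a by (intro psi_holder) auto
  also have "\<dots> = q powr \<alpha> * (r powr \<alpha> + 1) / \<alpha>"
    using q r by (simp add: powr_mult algebra_simps)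
  finally have Dle: "\<bar>D\<bar> \<le> q powr \<alpha> * (r powr \<alpha> + 1) / \<alpha>" .
  have "D\<^sup>2 \<le> (q powr \<alpha> * (r powr \<alpha> + 1) / \<alpha>)\<^sup>2"
    using Dle by (metis abs_ge_zero abs_le_square_iff abs_of_nonneg order_trans)
  also have "\<dots> = (q powr \<alpha>)\<^sup>2 * (r powr \<alpha> + 1)\<^sup>2 / \<alpha>\<^sup>2"
    by (simp add: power_mult_distrib power_divide)
  also have "(q powr \<alpha>)\<^sup>2 = lam powr \<alpha>"
  proof -
    have "(q powr \<alpha>)\<^sup>2 = q powr (2*\<alpha>)" using q by (simp add: sq_powr)
    also have "\<dots> = (q powr 2) powr \<alpha>" by (simp add: powr_powr)
    also have "q powr 2 = lam" using q lam by (simp add: q_def powr_realpow)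
    finally show ?thesis .
  qed
  also have "(r powr \<alpha> + 1)\<^sup>2 \<le> 2 * PP \<alpha> z"
  proof -
    have "0 \<le> (r powr \<alpha> - 1)\<^sup>2" by simp
    then have "(r powr \<alpha> + 1)\<^sup>2 \<le> 2 * ((r powr \<alpha>)\<^sup>2 + 1)" by (simp add: power2_eq_square algebra_simps)
    also have "(r powr \<alpha>)\<^sup>2 = r powr (2*\<alpha>)" using r by (simp add: sq_powr)
    also have "2 * (r powr (2*\<alpha>) + 1) \<le> 2 * PP \<alpha> z"
      unfolding PP_def r_def by simp
    finally show ?thesis .
  qed
  finally have D2: "D\<^sup>2 \<le> lam powr \<alpha> * (2 * PP \<alpha> z) / \<alpha>\<^sup>2"
    using a by (simp add: divide_right_mono mult_left_mono)
  have "(klam lam u z - kker z)\<^sup>2 = D\<^sup>2 / (4 * pi\<^sup>2)"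
    by (simp add: eq power_divide power_mult_distrib)
  also have "\<dots> \<le> lam powr \<alpha> * (2 * PP \<alpha> z) / \<alpha>\<^sup>2 / (4 * pi\<^sup>2)"
    using D2 by (intro divide_right_mono) auto
  also have "\<dots> \<le> lam powr \<alpha> / (pi\<^sup>2 * \<alpha>\<^sup>2) * PP \<alpha> z"
  proof -
    have "\<And>L P::real. L * (2 * P) / \<alpha>\<^sup>2 / (4 * pi\<^sup>2) = (L / (pi\<^sup>2 * \<alpha>\<^sup>2) * P) / 2"
      by (simp add: field_simps)
    then have e: "lam powr \<alpha> * (2 * PP \<alpha> z) / \<alpha>\<^sup>2 / (4 * pi\<^sup>2) = (lam powr \<alpha> / (pi\<^sup>2 * \<alpha>\<^sup>2) * PP \<alpha> z) / 2" .
    have "lam powr \<alpha> / (pi\<^sup>2 * \<alpha>\<^sup>2) * PP \<alpha> z \<ge> 0"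
      using PP_nonneg by simp
    moreover have "\<And>X::real. X \<ge> 0 \<Longrightarrow> X/2 \<le> X" by simp
    ultimately show ?thesis unfolding e by blast
  qed
  finally show ?thesis .
qed

lemma klam_bound:
  fixes z u :: "real^2" and lam \<alpha> :: real
  assumes z: "z \<noteq> 0" and u: "norm u = 1" and lam: "lam > 0" and a: "0 < \<alpha>" "\<alpha> \<le> 1"
  shows "(klam lam u z)\<^sup>2 \<le> (4/(pi\<^sup>2 * \<alpha>\<^sup>2) + 2 * (lam powr \<alpha> / (pi\<^sup>2 * \<alpha>\<^sup>2))) * PP \<alpha> z"
proof -
  have "(klam lam u z)\<^sup>2 = (kker z + (klam lam u z - kker z))\<^sup>2" by simp
  also have "\<dots> \<le> 2 * (kker z)\<^sup>2 + 2 * (klam lam u z - kker z)\<^sup>2"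
  proof -
    have "0 \<le> (kker z - (klam lam u z - kker z))\<^sup>2" by simp
    then show ?thesis by (simp add: power2_eq_square algebra_simps)
  qed
  also have "\<dots> \<le> 2 * (2/(pi\<^sup>2 * \<alpha>\<^sup>2) * PP \<alpha> z) + 2 * (lam powr \<alpha> / (pi\<^sup>2 * \<alpha>\<^sup>2) * PP \<alpha> z)"
    using kker_bound[OF z a(1)] d_bound[OF z u lam a] by linarith
  also have "\<dots> = (4/(pi\<^sup>2 * \<alpha>\<^sup>2) + 2 * (lam powr \<alpha> / (pi\<^sup>2 * \<alpha>\<^sup>2))) * PP \<alpha> z"
    by (simp add: algebra_simps)
  finally show ?thesis .
qed




lemma borel_to_leb: "h \<in> borel_measurable borel \<Longrightarrow> h \<in> borel_measurable lebesgue"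
  by (rule measurable_completion) simp

lemma weight_leb[measurable]: "(\<lambda>x::real^2. (1 + (norm x)\<^sup>2) powr s) \<in> borel_measurable lebesgue"
  by (rule borel_to_leb) measurable

lemma borel_version:
  fixes f :: "real^2 \<Rightarrow> complex"
  assumes "f \<in> borel_measurable lebesgue"
  obtains g where "g \<in> borel_measurable borel" "AE y in lborel. f y = g y"
proof -
  have "(\<lambda>y. Re (f y)) \<in> borel_measurable (completion lborel)" using assms by measurable
  from completion_ex_borel_measurable_real[OF this]
  obtain gr where gr: "gr \<in> borel_measurable lborel" "AE y in lborel. Re (f y) = gr y" by blast
  have "(\<lambda>y. Im (f y)) \<in> borel_measurable (completion lborel)" using assms by measurable
  from completion_ex_borel_measurable_real[OF this]
  obtain gi where gi: "gi \<in> borel_measurable lborel" "AE y in lborel. Im (f y) = gi y" by blast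
  define g where "g = (\<lambda>y. complex_of_real (gr y) + \<i> * complex_of_real (gi y))"
  have "g \<in> borel_measurable borel" using gr gi unfolding g_def by simp
  moreover have "AE y in lborel. f y = g y"
    using gr(2) gi(2)
  proof eventually_elim
    case (elim y)
    then show ?case by (simp add: g_def complex_eq_iff)
  qed
  ultimately show ?thesis using that by blast
qed

lemma OP:
  fixes K :: "real^2 \<Rightarrow> real" and f :: "real^2 \<Rightarrow> complex" and s c M \<alpha> :: real
  assumes Kb[measurable]: "K \<in> borel_measurable borel"
    and c: "c \<ge> 0" and M: "M \<ge> 0"
    and Kbd: "\<forall>z. z \<noteq> 0 \<longrightarrow> (K z)\<^sup>2 \<le> c * PP \<alpha> z"
    and JP: "(\<integral>\<^sup>+x. \<integral>\<^sup>+y. ennreal (w2 s x * w2 s y * PP \<alpha> (x - y)) \<partial>lborel \<partial>lborel) \<le> ennreal M"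
    and f: "f \<in> Hs s"
  shows "conv K f \<in> Hs (-s)" "Hnorm (-s) (conv K f) \<le> sqrt (c * M) * Hnorm s f"
    "AE x in lebesgue. integrable lebesgue (\<lambda>y. complex_of_real (K (x - y)) * f y)"
proof -
  have fm[measurable]: "f \<in> borel_measurable lebesgue" and fi: "integrable lebesgue (\<lambda>x. (1 + (norm x)\<^sup>2) powr s * (cmod (f x))\<^sup>2)"
    using f by (auto simp: Hs_def)
  obtain g where gm[measurable]: "g \<in> borel_measurable borel" and fg: "AE y in lborel. f y = g y"
    using borel_version[OF fm] by blast
  have fgL: "AE y in lebesgue. f y = g y" using fg by (rule AE_completion)
  have gmL[measurable]: "g \<in> borel_measurable lebesgue" using gm by (simp add: measurable_completion)
  have KL[measurable]: "(\<lambda>y. K (x - y)) \<in> borel_measurable lebesgue" for x by (rule borel_to_leb) measurable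
  define V where "V = (LINT y|lborel. (1 + (norm y)\<^sup>2) powr s * (cmod (g y))\<^sup>2)"
  have giL: "integrable lebesgue (\<lambda>y. (1 + (norm y)\<^sup>2) powr s * (cmod (g y))\<^sup>2)"
  proof (rule integrable_cong_AE_imp[OF fi])
    show "(\<lambda>y. (1 + (norm y)\<^sup>2) powr s * (cmod (g y))\<^sup>2) \<in> borel_measurable lebesgue" by (rule borel_to_leb) measurable
    show "AE x in lebesgue. (1 + (norm x)\<^sup>2) powr s * (cmod (f x))\<^sup>2 = (1 + (norm x)\<^sup>2) powr s * (cmod (g x))\<^sup>2"
      using fgL by eventually_elim simp
  qed
  have gi: "integrable lborel (\<lambda>y. (1 + (norm y)\<^sup>2) powr s * (cmod (g y))\<^sup>2)"
    using giL by (subst (asm) integrable_completion) auto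
  have HnV: "Hnorm s f = sqrt V"
  proof -
    have "(LINT x|lebesgue. (1 + (norm x)\<^sup>2) powr s * (cmod (f x))\<^sup>2) = (LINT x|lebesgue. (1 + (norm x)\<^sup>2) powr s * (cmod (g x))\<^sup>2)"
      using fgL by (intro integral_cong_AE) (auto elim!: eventually_mono)
    also have "\<dots> = V" unfolding V_def by (rule integral_completion) measurable
    finally show ?thesis by (simp add: Hnorm_def)
  qed
  have V0: "V \<ge> 0" unfolding V_def by (intro integral_nonneg_AE) auto
  have N2: "(\<integral>\<^sup>+y. ennreal ((1 + (norm y)\<^sup>2) powr s * (cmod (g y))\<^sup>2) \<partial>lborel) = ennreal V"
    unfolding V_def by (rule nn_integral_eq_integral[OF gi]) auto
  define G where "G = (\<lambda>x. LINT y|lborel. complex_of_real (K (x - y)) * g y)"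
  have Gm[measurable]: "G \<in> borel_measurable borel" unfolding G_def by measurable
  have conv_eq: "conv K f = G"
  proof
    fix x
    have "conv K f x = (LINT y|lebesgue. complex_of_real (K (x - y)) * g y)"
      unfolding conv_def using fgL by (intro integral_cong_AE) (auto elim!: eventually_mono)
    also have "\<dots> = G x" unfolding G_def by (rule integral_completion) measurable
    finally show "conv K f x = G x" .
  qed
  define Q where "Q = (\<lambda>x. \<integral>\<^sup>+y. ennreal (w2 s y * (K (x - y))\<^sup>2) \<partial>lborel)"
  have Qm[measurable]: "Q \<in> borel_measurable borel" unfolding Q_def by measurable
  have CS: "(\<integral>\<^sup>+y. ennreal (norm (complex_of_real (K (x - y)) * g y)) \<partial>lborel)\<^sup>2 \<le> Q x * ennreal V" for x
  proof -
    define F where "F = (\<lambda>y. ennreal (\<bar>K (x - y)\<bar> * sqrt (w2 s y)))"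
    define H where "H = (\<lambda>y. ennreal (cmod (g y) / sqrt (w2 s y)))"
    have [measurable]: "F \<in> borel_measurable lborel" "H \<in> borel_measurable lborel" unfolding F_def H_def by measurable
    have "(\<integral>\<^sup>+y. ennreal (norm (complex_of_real (K (x - y)) * g y)) \<partial>lborel) = (\<integral>\<^sup>+y. F y * H y \<partial>lborel)"
    proof (intro nn_integral_cong)
      fix y
      have "sqrt (w2 s y) > 0" using w2_pos by simp
      then show "ennreal (norm (complex_of_real (K (x - y)) * g y)) = F y * H y"
        unfolding F_def H_def by (simp add: ennreal_mult[symmetric] norm_mult)
    qed
    also have "(\<integral>\<^sup>+y. F y * H y \<partial>lborel)\<^sup>2 \<le> (\<integral>\<^sup>+y. F y ^ 2 \<partial>lborel) * (\<integral>\<^sup>+y. H y ^ 2 \<partial>lborel)"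
      by (rule Cauchy_Schwarz_nn_integral) measurable
    also have "(\<integral>\<^sup>+y. F y ^ 2 \<partial>lborel) = Q x"
      unfolding Q_def F_def
    proof (intro nn_integral_cong)
      fix y
      have "w2 s y > 0" by (rule w2_pos)
      then show "ennreal (\<bar>K (x - y)\<bar> * sqrt (w2 s y)) ^ 2 = ennreal (w2 s y * (K (x - y))\<^sup>2)"
        by (simp add: ennreal_power power_mult_distrib mult.commute)
    qed
    also have "(\<integral>\<^sup>+y. H y ^ 2 \<partial>lborel) = ennreal V"
      unfolding N2[symmetric] H_def
    proof (intro nn_integral_cong)
      fix y
      have "w2 s y > 0" by (rule w2_pos)
      moreover have "1 / w2 s y = (1 + (norm y)\<^sup>2) powr s"
        unfolding w2_def by (simp add: powr_minus divide_inverse)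
      ultimately show "ennreal (cmod (g y) / sqrt (w2 s y)) ^ 2 = ennreal ((1 + (norm y)\<^sup>2) powr s * (cmod (g y))\<^sup>2)"
        by (simp add: ennreal_power power_divide divide_simps)
    qed
    finally show ?thesis .
  qed
  have ptw: "ennreal ((cmod (G x))\<^sup>2) \<le> Q x * ennreal V" for x
  proof -
    have "ennreal (cmod (G x)) \<le> (\<integral>\<^sup>+y. ennreal (norm (complex_of_real (K (x - y)) * g y)) \<partial>lborel)"
    proof (cases "integrable lborel (\<lambda>y. complex_of_real (K (x - y)) * g y)")
      case True
      then show ?thesis unfolding G_def by (rule integral_norm_bound_ennreal)
    next
      case False
      then have "G x = 0" unfolding G_def by (rule not_integrable_integral_eq)
      then show ?thesis by simp
    qed
    then have "ennreal (cmod (G x)) ^ 2 \<le> (\<integral>\<^sup>+y. ennreal (norm (complex_of_real (K (x - y)) * g y)) \<partial>lborel) ^ 2"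
      by (rule power_mono) simp
    also have "\<dots> \<le> Q x * ennreal V" by (rule CS)
    finally show ?thesis by (simp add: ennreal_power)
  qed
  have Qbound: "ennreal (w2 s x) * Q x \<le> ennreal c * (\<integral>\<^sup>+y. ennreal (w2 s x * w2 s y * PP \<alpha> (x - y)) \<partial>lborel)" for x
  proof -
    have "ennreal (w2 s x) * Q x = (\<integral>\<^sup>+y. ennreal (w2 s x) * ennreal (w2 s y * (K (x - y))\<^sup>2) \<partial>lborel)"
      unfolding Q_def by (rule nn_integral_cmult[symmetric]) measurable
    also have "\<dots> \<le> (\<integral>\<^sup>+y. ennreal c * ennreal (w2 s x * w2 s y * PP \<alpha> (x - y)) \<partial>lborel)"
    proof (rule nn_integral_mono_AE)
      show "AE y in lborel. ennreal (w2 s x) * ennreal (w2 s y * (K (x - y))\<^sup>2) \<le> ennreal c * ennreal (w2 s x * w2 s y * PP \<alpha> (x - y))"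
        using AE_lborel_singleton[of x]
      proof eventually_elim
        case (elim y)
        then have "x - y \<noteq> 0" by simp
        from Kbd[rule_format, OF this] have "w2 s x * (w2 s y * (K (x - y))\<^sup>2) \<le> w2 s x * (w2 s y * (c * PP \<alpha> (x - y)))"
          using w2_pos[of s x] w2_pos[of s y] by (intro mult_left_mono) auto
        then have "ennreal (w2 s x * (w2 s y * (K (x - y))\<^sup>2)) \<le> ennreal (c * (w2 s x * w2 s y * PP \<alpha> (x - y)))"
          by (intro ennreal_leI) (simp add: mult_ac)
        then show ?case using w2_pos[of s x] w2_pos[of s y] c PP_nonneg[of \<alpha> "x - y"]
          by (simp add: ennreal_mult[symmetric])
      qed
    qed
    also have "\<dots> = ennreal c * (\<integral>\<^sup>+y. ennreal (w2 s x * w2 s y * PP \<alpha> (x - y)) \<partial>lborel)"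
      by (rule nn_integral_cmult) measurable
    finally show ?thesis .
  qed
  define WQ where "WQ = (\<integral>\<^sup>+x. ennreal (w2 s x) * Q x \<partial>lborel)"
  have WQ: "WQ \<le> ennreal (c * M)"
  proof -
    have "WQ \<le> (\<integral>\<^sup>+x. ennreal c * (\<integral>\<^sup>+y. ennreal (w2 s x * w2 s y * PP \<alpha> (x - y)) \<partial>lborel) \<partial>lborel)"
      unfolding WQ_def by (intro nn_integral_mono Qbound)
    also have "\<dots> = ennreal c * (\<integral>\<^sup>+x. \<integral>\<^sup>+y. ennreal (w2 s x * w2 s y * PP \<alpha> (x - y)) \<partial>lborel \<partial>lborel)"
      by (rule nn_integral_cmult) measurable
    also have "\<dots> \<le> ennreal c * ennreal M" using JP by (rule mult_left_mono) simp
    also have "\<dots> = ennreal (c * M)" using c M by (simp add: ennreal_mult)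
    finally show ?thesis .
  qed
  have tot: "(\<integral>\<^sup>+x. ennreal (w2 s x * (cmod (G x))\<^sup>2) \<partial>lborel) \<le> ennreal (c * M * V)"
  proof -
    have "(\<integral>\<^sup>+x. ennreal (w2 s x * (cmod (G x))\<^sup>2) \<partial>lborel) \<le> (\<integral>\<^sup>+x. ennreal (w2 s x) * Q x * ennreal V \<partial>lborel)"
    proof (intro nn_integral_mono)
      fix x
      have "ennreal (w2 s x * (cmod (G x))\<^sup>2) = ennreal (w2 s x) * ennreal ((cmod (G x))\<^sup>2)"
        using w2_pos[of s x] by (simp add: ennreal_mult)
      also have "\<dots> \<le> ennreal (w2 s x) * (Q x * ennreal V)" by (intro mult_left_mono ptw) simp
      finally show "ennreal (w2 s x * (cmod (G x))\<^sup>2) \<le> ennreal (w2 s x) * Q x * ennreal V" by (simp add: mult_ac)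
    qed
    also have "\<dots> = WQ * ennreal V" unfolding WQ_def by (rule nn_integral_multc) measurable
    also have "\<dots> \<le> ennreal (c * M) * ennreal V" using WQ by (rule mult_right_mono) simp
    also have "\<dots> = ennreal (c * M * V)" using c M V0 by (simp add: ennreal_mult)
    finally show ?thesis .
  qed
  have intG: "integrable lborel (\<lambda>x. w2 s x * (cmod (G x))\<^sup>2)"
  proof (rule integrableI_nonneg)
    show "(\<lambda>x. w2 s x * (cmod (G x))\<^sup>2) \<in> borel_measurable lborel" by measurable
    show "AE x in lborel. 0 \<le> w2 s x * (cmod (G x))\<^sup>2" using w2_pos[of s] by (simp add: less_imp_le)
    show "(\<integral>\<^sup>+x. ennreal (w2 s x * (cmod (G x))\<^sup>2) \<partial>lborel) < \<infinity>"
      using tot by (simp add: le_less_trans)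
  qed
  have wG: "(\<lambda>x. (1 + (norm x)\<^sup>2) powr (-s) * (cmod (G x))\<^sup>2) = (\<lambda>x. w2 s x * (cmod (G x))\<^sup>2)"
    by (simp add: w2_def)
  show "conv K f \<in> Hs (-s)"
    unfolding conv_eq Hs_def
  proof (intro CollectI conjI)
    show "G \<in> borel_measurable lebesgue" by (rule borel_to_leb) measurable
    show "integrable lebesgue (\<lambda>x. (1 + (norm x)\<^sup>2) powr (- s) * (cmod (G x))\<^sup>2)"
      unfolding wG by (subst integrable_completion) (use intG in auto)
  qed
  show "Hnorm (-s) (conv K f) \<le> sqrt (c * M) * Hnorm s f"
  proof -
    have "(LINT x|lebesgue. (1 + (norm x)\<^sup>2) powr (- s) * (cmod (G x))\<^sup>2) = (LINT x|lborel. w2 s x * (cmod (G x))\<^sup>2)"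
      unfolding wG by (rule integral_completion) measurable
    also have "\<dots> = enn2real (\<integral>\<^sup>+x. ennreal (w2 s x * (cmod (G x))\<^sup>2) \<partial>lborel)"
      by (rule integral_eq_nn_integral) (use w2_pos[of s] in \<open>auto simp: less_imp_le\<close>)
    also have "\<dots> \<le> c * M * V" using tot c M V0 by (intro enn2real_leI) auto
    finally have "Hnorm (-s) (conv K f) \<le> sqrt (c * M * V)"
      unfolding conv_eq Hnorm_def by simp
    also have "\<dots> = sqrt (c * M) * Hnorm s f" by (simp add: HnV real_sqrt_mult)
    finally show ?thesis .
  qed
  have "WQ < \<infinity>" using WQ by (rule le_less_trans) simp
  then have "WQ \<noteq> \<infinity>" by simp
  then have "AE x in lborel. ennreal (w2 s x) * Q x \<noteq> \<infinity>"
    unfolding WQ_def by (intro nn_integral_PInf_AE) measurable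
  then have "AE x in lborel. integrable lebesgue (\<lambda>y. complex_of_real (K (x - y)) * f y)"
  proof eventually_elim
    case (elim x)
    then have Qx: "Q x < \<infinity>" using w2_pos[of s x] by (auto simp: ennreal_mult_eq_top_iff top.not_eq_extremum)
    have "(\<integral>\<^sup>+y. ennreal (norm (complex_of_real (K (x - y)) * g y)) \<partial>lborel)\<^sup>2 < \<infinity>"
    proof -
      have "Q x * ennreal V < \<infinity>" using Qx by (simp add: ennreal_mult_less_top)
      with CS[of x] show ?thesis by (rule le_less_trans)
    qed
    then have fin: "(\<integral>\<^sup>+y. ennreal (norm (complex_of_real (K (x - y)) * g y)) \<partial>lborel) < \<infinity>"
      by (simp add: power_less_top_ennreal)
    have "integrable lborel (\<lambda>y. complex_of_real (K (x - y)) * g y)"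
      by (rule integrableI_bounded) (use fin in auto)
    then have "integrable lebesgue (\<lambda>y. complex_of_real (K (x - y)) * g y)"
      by (subst integrable_completion) auto
    then show ?case
    proof (rule integrable_cong_AE_imp)
      show "(\<lambda>y. complex_of_real (K (x - y)) * f y) \<in> borel_measurable lebesgue" by measurable
      show "AE y in lebesgue. complex_of_real (K (x - y)) * g y = complex_of_real (K (x - y)) * f y"
        using fgL by eventually_elim simp
    qed
  qed
  then show "AE x in lebesgue. integrable lebesgue (\<lambda>y. complex_of_real (K (x - y)) * f y)"
    by (rule AE_completion)
qed

lemma Hnorm_cong_AE:
  assumes [measurable]: "F \<in> borel_measurable lebesgue" "G \<in> borel_measurable lebesgue"
    and "AE x in lebesgue. F x = G x"
  shows "Hnorm s' F = Hnorm s' G"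
  unfolding Hnorm_def using assms(3)
  by (intro arg_cong[where f=sqrt] integral_cong_AE) (auto elim!: eventually_mono)

theorem corollary3p1:
  fixes s :: real and u :: "real^2"
  assumes "s > 1" and "norm u = 1"
  shows "(\<forall>f\<in>Hs s. conv kker f \<in> Hs (-s)) \<and>
         (\<exists>C. \<forall>f\<in>Hs s. Hnorm (-s) (conv kker f) \<le> C * Hnorm s f) \<and>
         (\<forall>lam>0. \<forall>f\<in>Hs s. conv (klam lam u) f \<in> Hs (-s)) \<and>
         (\<forall>\<epsilon>>0. \<exists>\<delta>>0. \<forall>lam. 0 < lam \<and> lam < \<delta> \<longrightarrow>
            (\<forall>f\<in>Hs s. Hnorm (-s) (\<lambda>x. conv (klam lam u) f x - conv kker f x)
                         \<le> \<epsilon> * Hnorm s f))"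
proof -
  have s: "s > 1" and u: "norm u = 1" using assms by auto
  define \<alpha> where "\<alpha> = min 1 ((s-1)/2)"
  have a: "0 < \<alpha>" "\<alpha> \<le> 1" "2*\<alpha> \<le> s - 1" using s by (auto simp: \<alpha>_def min_def)
  define JI where "JI = (\<integral>\<^sup>+x. \<integral>\<^sup>+y. ennreal (w2 s x * w2 s y * PP \<alpha> (x - y)) \<partial>lborel \<partial>lborel)"
  have JIfin: "JI < \<infinity>" unfolding JI_def using JP_finite[OF s a] .
  define M0 where "M0 = enn2real JI"
  have M0: "M0 \<ge> 0" by (simp add: M0_def)
  have JI: "JI \<le> ennreal M0" using JIfin by (simp add: M0_def less_top)
  define ck where "ck = 2/(pi\<^sup>2 * \<alpha>\<^sup>2)"
  have ck: "ck \<ge> 0" by (simp add: ck_def)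
  have kb: "\<forall>z. z \<noteq> 0 \<longrightarrow> (kker z)\<^sup>2 \<le> ck * PP \<alpha> z" unfolding ck_def using kker_bound a(1) by blast
  note OPk = OP[OF kker_borel ck M0 kb JI[unfolded JI_def]]
  have P1: "\<forall>f\<in>Hs s. conv kker f \<in> Hs (-s)" using OPk(1) by blast
  have P2: "\<exists>C. \<forall>f\<in>Hs s. Hnorm (-s) (conv kker f) \<le> C * Hnorm s f" using OPk(2) by blast
  have OPl: "conv (klam lam u) f \<in> Hs (-s) \<and> (AE x in lebesgue. integrable lebesgue (\<lambda>y. complex_of_real (klam lam u (x - y)) * f y))"
    if lam: "lam > 0" and f: "f \<in> Hs s" for lam f
  proof -
    define cl where "cl = 4/(pi\<^sup>2 * \<alpha>\<^sup>2) + 2 * (lam powr \<alpha> / (pi\<^sup>2 * \<alpha>\<^sup>2))"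
    have cl: "cl \<ge> 0" by (simp add: cl_def)
    have lb: "\<forall>z. z \<noteq> 0 \<longrightarrow> (klam lam u z)\<^sup>2 \<le> cl * PP \<alpha> z"
      unfolding cl_def using klam_bound u lam a(1,2) by blast
    note O = OP[OF klam_borel cl M0 lb JI[unfolded JI_def] f]
    show ?thesis using O(1,3) by blast
  qed
  have P3: "\<forall>lam>0. \<forall>f\<in>Hs s. conv (klam lam u) f \<in> Hs (-s)" using OPl by blast
  have P4: "\<forall>\<epsilon>>0. \<exists>\<delta>>0. \<forall>lam. 0 < lam \<and> lam < \<delta> \<longrightarrow>
            (\<forall>f\<in>Hs s. Hnorm (-s) (\<lambda>x. conv (klam lam u) f x - conv kker f x) \<le> \<epsilon> * Hnorm s f)"
  proof (intro allI impI)
    fix \<epsilon> :: real assume e: "\<epsilon> > 0"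
    define B where "B = \<epsilon>\<^sup>2 * pi\<^sup>2 * \<alpha>\<^sup>2 / (M0 + 1)"
    have B: "B > 0" using e a M0 by (simp add: B_def)
    define \<delta> where "\<delta> = B powr (1/\<alpha>)"
    have d: "\<delta> > 0" using B by (simp add: \<delta>_def)
    show "\<exists>\<delta>>0. \<forall>lam. 0 < lam \<and> lam < \<delta> \<longrightarrow>
            (\<forall>f\<in>Hs s. Hnorm (-s) (\<lambda>x. conv (klam lam u) f x - conv kker f x) \<le> \<epsilon> * Hnorm s f)"
    proof (intro exI[of _ \<delta>] conjI allI impI ballI)
      show "\<delta> > 0" by (rule d)
      fix lam f assume lam: "0 < lam \<and> lam < \<delta>" and f: "f \<in> Hs s"
      define cd where "cd = lam powr \<alpha> / (pi\<^sup>2 * \<alpha>\<^sup>2)"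
      have cd: "cd \<ge> 0" by (simp add: cd_def)
      define D where "D = (\<lambda>z. klam lam u z - kker z)"
      have Db[measurable]: "D \<in> borel_measurable borel" unfolding D_def by measurable
      have db: "\<forall>z. z \<noteq> 0 \<longrightarrow> (D z)\<^sup>2 \<le> cd * PP \<alpha> z"
        unfolding cd_def D_def using d_bound u lam a(1,2) by blast
      note O = OP[OF Db cd M0 db JI[unfolded JI_def] f]
      have lampow: "lam powr \<alpha> \<le> B"
      proof -
        have "lam powr \<alpha> \<le> \<delta> powr \<alpha>" using lam a by (intro powr_mono2) auto
        also have "\<delta> powr \<alpha> = B" using B a by (simp add: \<delta>_def powr_powr)
        finally show ?thesis .
      qed
      have "cd * M0 \<le> \<epsilon>\<^sup>2"
      proof -
        have "cd * M0 \<le> B / (pi\<^sup>2 * \<alpha>\<^sup>2) * M0"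
          unfolding cd_def using lampow M0 a by (intro mult_right_mono divide_right_mono) auto
        also have "\<dots> = \<epsilon>\<^sup>2 * (M0 / (M0 + 1))"
        proof -
          have gen: "\<And>P Q::real. P > 0 \<Longrightarrow> Q > 0 \<Longrightarrow> (\<epsilon>\<^sup>2 * P / Q) / P * M0 = \<epsilon>\<^sup>2 * (M0 / Q)"
            by (simp add: field_simps)
          have "pi\<^sup>2 * \<alpha>\<^sup>2 > 0" using a by simp
          moreover have "M0 + 1 > 0" using M0 by simp
          ultimately have "(\<epsilon>\<^sup>2 * (pi\<^sup>2 * \<alpha>\<^sup>2) / (M0 + 1)) / (pi\<^sup>2 * \<alpha>\<^sup>2) * M0 = \<epsilon>\<^sup>2 * (M0 / (M0 + 1))"
            by (rule gen)
          then show ?thesis by (simp add: B_def mult.assoc)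
        qed
        also have "\<dots> \<le> \<epsilon>\<^sup>2 * 1" using M0 by (intro mult_left_mono) auto
        finally show ?thesis by simp
      qed
      then have sq: "sqrt (cd * M0) \<le> \<epsilon>"
        using e by (metis abs_of_pos real_sqrt_abs real_sqrt_le_mono)
      have Hn0: "Hnorm s f \<ge> 0" by (simp add: Hnorm_def)
      have eqAE: "AE x in lebesgue. conv (klam lam u) f x - conv kker f x = conv D f x"
        using OPl[OF _ f, of lam] lam OPk(3)[OF f]
      proof -
        have "AE x in lebesgue. integrable lebesgue (\<lambda>y. complex_of_real (klam lam u (x - y)) * f y)"
          using OPl[OF _ f, of lam] lam by blast
        moreover have "AE x in lebesgue. integrable lebesgue (\<lambda>y. complex_of_real (kker (x - y)) * f y)"
          using OPk(3)[OF f] .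
        ultimately show ?thesis
        proof eventually_elim
          case (elim x)
          have "conv (klam lam u) f x - conv kker f x
              = (LINT y|lebesgue. complex_of_real (klam lam u (x - y)) * f y - complex_of_real (kker (x - y)) * f y)"
            unfolding conv_def using Bochner_Integration.integral_diff[OF elim(1) elim(2)] by simp
          also have "\<dots> = conv D f x" unfolding conv_def D_def by (simp add: algebra_simps)
          finally show ?case .
        qed
      qed
      have m1: "conv (klam lam u) f \<in> borel_measurable lebesgue" using OPl[OF _ f, of lam] lam by (auto simp: Hs_def)
      have m2: "conv kker f \<in> borel_measurable lebesgue" using OPk(1)[OF f] by (auto simp: Hs_def)
      have m3: "conv D f \<in> borel_measurable lebesgue" using O(1) by (auto simp: Hs_def)
      have "Hnorm (-s) (\<lambda>x. conv (klam lam u) f x - conv kker f x) = Hnorm (-s) (conv D f)"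
        using m1 m2 m3 eqAE by (intro Hnorm_cong_AE) auto
      also have "\<dots> \<le> sqrt (cd * M0) * Hnorm s f" by (rule O(2))
      also have "\<dots> \<le> \<epsilon> * Hnorm s f" using sq Hn0 by (rule mult_right_mono)
      finally show "Hnorm (-s) (\<lambda>x. conv (klam lam u) f x - conv kker f x) \<le> \<epsilon> * Hnorm s f" .
    qed
  qed
  show ?thesis using P1 P2 P3 P4 by blast
qed


end
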